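(* From a name of a meromorphic function $f$ and a name of a closed set $C\subseteq\mathrm{dom}(f)$, one can uniformly compute a name of the closed set $f[C]$.
   Context: Computability is in the sense of Type-Two Effectivity. $\hat{\mathbb{C}}=\mathbb{C}\cup\{\infty\}$, and $D_r(z)$ is the open disk of radius $r$ centered at $z$. The basic open sets are the open rectangles whose vertices have rational coordinates, together with the sets $\hat{\mathbb{C}}\setminus\overline{D_r(0)}$ with $r$ rational. Names: - A name of a point $z\in\hat{\mathbb{C}}$ is a list of all basic open sets containing $z$. - A name of a closed set $C\subseteq\hat{\mathbb{C}}$ is a list of all basic open sets meeting $C$. - A name of a partial function $f:\subseteq\hat{\mathbb{C}}\to\hat{\mathbb{C}}$ is an oracle $X\subseteq\mathbb{N}$ together with a code of an oracle Turing machine with one-way output tape. With oracle $X$, this machine converts every name of every $z\in\mathrm{dom}(f)$ into a name of $f(z)$. - "Uniformly computable" means a single Turing machine, given names of the data, writes a name of the output. A meromorphic function is one meromorphic on an open subset of $\hat{\mathbb{C}}$, with values in $\hat{\mathbb{C}}$. *)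

theory Defs
  imports "HOL-Analysis.Analysis" "HOL-Library.Nat_Bijection"
begin

text \<open>Programs of a Turing-complete model of oracle computation (mu-recursive
functions with an oracle-call primitive).\<close>

datatype rf = Zer | Suc_rf | Proj nat | Comp rf "rf list" | Prim rf rf | Mu rf | Orc

definition arg0 :: "nat list \<Rightarrow> nat" where
  "arg0 xs = (case xs of [] \<Rightarrow> 0 | x # _ \<Rightarrow> x)"

inductive eval :: "(nat \<Rightarrow> nat) \<Rightarrow> rf \<Rightarrow> nat list \<Rightarrow> nat \<Rightarrow> bool"
  for g :: "nat \<Rightarrow> nat" where
  ev_zer: "eval g Zer xs 0"
| ev_suc: "eval g Suc_rf xs (Suc (arg0 xs))"
| ev_proj: "i < length xs \<Longrightarrow> eval g (Proj i) xs (xs ! i)"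
| ev_orc: "eval g Orc xs (g (arg0 xs))"
| ev_comp: "list_all2 (\<lambda>h y. eval g h xs y) hs ys \<Longrightarrow> eval g f ys y \<Longrightarrow> eval g (Comp f hs) xs y"
| ev_prim0: "eval g f xs y \<Longrightarrow> eval g (Prim f h) (0 # xs) y"
| ev_primS: "eval g (Prim f h) (n # xs) r \<Longrightarrow> eval g h (r # n # xs) y \<Longrightarrow>
             eval g (Prim f h) (Suc n # xs) y"
| ev_mu: "eval g f (n # xs) 0 \<Longrightarrow> (\<forall>m<n. \<exists>y. eval g f (m # xs) (Suc y)) \<Longrightarrow>
          eval g (Mu f) xs n"

fun rf_enc :: "rf \<Rightarrow> nat" where
  "rf_enc Zer = prod_encode (0, 0)"
| "rf_enc Suc_rf = prod_encode (1, 0)"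
| "rf_enc (Proj i) = prod_encode (2, i)"
| "rf_enc (Comp f hs) = prod_encode (3, prod_encode (rf_enc f, list_encode (map rf_enc hs)))"
| "rf_enc (Prim f h) = prod_encode (4, prod_encode (rf_enc f, rf_enc h))"
| "rf_enc (Mu f) = prod_encode (5, rf_enc f)"
| "rf_enc Orc = prod_encode (6, 0)"

definition join :: "(nat \<Rightarrow> nat) \<Rightarrow> (nat \<Rightarrow> nat) \<Rightarrow> nat \<Rightarrow> nat" where
  "join a b k = (if even k then a (k div 2) else b (k div 2))"

definition chi :: "nat set \<Rightarrow> nat \<Rightarrow> nat" where
  "chi X k = (if k \<in> X then 1 else 0)"

definition computes :: "rf \<Rightarrow> (nat \<Rightarrow> nat) \<Rightarrow> (nat \<Rightarrow> nat) \<Rightarrow> bool" where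
  "computes p g r \<longleftrightarrow> (\<forall>n. eval g p [n] (r n))"

section \<open>The Riemann sphere, complex option (None = infinity)\<close>

definition cs_open :: "complex option set \<Rightarrow> bool" where
  "cs_open A \<longleftrightarrow> open {z. Some z \<in> A} \<and>
     (None \<in> A \<longrightarrow> (\<exists>R. \<forall>z. R < norm z \<longrightarrow> Some z \<in> A))"

definition cs_closed :: "complex option set \<Rightarrow> bool" where
  "cs_closed C \<longleftrightarrow> cs_open (- C)"

text \<open>Inverse charts: around a finite point the identity, around infinity w |-> 1/w.\<close>
definition ichart :: "complex option \<Rightarrow> complex \<Rightarrow> complex option" where
  "ichart a w = (case a of Some _ \<Rightarrow> Some w | None \<Rightarrow> (if w = 0 then None else Some (1 / w)))"

definition ctr :: "complex option \<Rightarrow> complex" where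
  "ctr a = (case a of Some c \<Rightarrow> c | None \<Rightarrow> 0)"

text \<open>Coordinate of a value v in the chart centered at b.\<close>
definition vcoord :: "complex option \<Rightarrow> complex option \<Rightarrow> complex" where
  "vcoord b v = (case b of
      Some _ \<Rightarrow> (case v of Some x \<Rightarrow> x | None \<Rightarrow> 0)
    | None \<Rightarrow> (case v of Some x \<Rightarrow> 1 / x | None \<Rightarrow> 0))"

definition vok :: "complex option \<Rightarrow> complex option \<Rightarrow> bool" where
  "vok b v = (case b of Some _ \<Rightarrow> v \<noteq> None | None \<Rightarrow> v \<noteq> Some 0)"

text \<open>f is meromorphic on the open set U of the sphere: a holomorphic map
U -> sphere (holomorphic in local charts), not identically infinity on any
nonempty open subset of U.\<close>
definition meromorphic_sphere :: "complex option set \<Rightarrow> (complex option \<Rightarrow> complex option) \<Rightarrow> bool" where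
  "meromorphic_sphere U f \<longleftrightarrow> cs_open U \<and>
     (\<forall>a\<in>U. \<exists>r>0. (\<forall>w\<in>ball (ctr a) r. ichart a w \<in> U \<and> vok (f a) (f (ichart a w))) \<and>
                  (\<lambda>w. vcoord (f a) (f (ichart a w))) holomorphic_on ball (ctr a) r) \<and>
     (\<forall>W. cs_open W \<and> W \<noteq> {} \<and> W \<subseteq> U \<longrightarrow> (\<exists>z\<in>W. f z \<noteq> None))"

definition rat_dec :: "nat \<Rightarrow> rat" where
  "rat_dec n = (case prod_decode n of (p, q) \<Rightarrow> Fract (int_decode p) (int_decode q))"

definition rect :: "rat \<Rightarrow> rat \<Rightarrow> rat \<Rightarrow> rat \<Rightarrow> complex option set" where
  "rect a b c d = {Some z | z. of_rat a < Re z \<and> Re z < of_rat b \<and> of_rat c < Im z \<and> Im z < of_rat d}"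

definition ext_disk :: "rat \<Rightarrow> complex option set" where
  "ext_disk r = {None} \<union> {Some z | z. of_rat r < norm z}"

text \<open>Every natural number denotes a basic open set; every basic open set is denoted.\<close>
definition bset :: "nat \<Rightarrow> complex option set" where
  "bset m = (case prod_decode m of (t, k) \<Rightarrow>
     (if t = 0 then
        (case prod_decode k of (a, k1) \<Rightarrow> case prod_decode k1 of (b, k2) \<Rightarrow>
           case prod_decode k2 of (c, d) \<Rightarrow> rect (rat_dec a) (rat_dec b) (rat_dec c) (rat_dec d))
      else ext_disk (rat_dec k)))"

text \<open>Sets listed by a sequence; symbol 0 is a blank, Suc m lists bset m.\<close>
definition listed :: "(nat \<Rightarrow> nat) \<Rightarrow> complex option set set" where
  "listed q = {bset m | m. \<exists>k. q k = Suc m}"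

definition pt_name :: "complex option \<Rightarrow> (nat \<Rightarrow> nat) \<Rightarrow> bool" where
  "pt_name z q \<longleftrightarrow> listed q = {B \<in> range bset. z \<in> B}"

definition cl_name :: "complex option set \<Rightarrow> (nat \<Rightarrow> nat) \<Rightarrow> bool" where
  "cl_name C q \<longleftrightarrow> listed q = {B \<in> range bset. B \<inter> C \<noteq> {}}"

definition fun_name :: "complex option set \<Rightarrow> (complex option \<Rightarrow> complex option) \<Rightarrow> nat set \<Rightarrow> rf \<Rightarrow> bool" where
  "fun_name U f X p \<longleftrightarrow>
     (\<forall>z\<in>U. \<forall>q. pt_name z q \<longrightarrow> (\<exists>r. computes p (join (chi X) q) r \<and> pt_name (f z) r))"

definition fseq :: "nat set \<Rightarrow> rf \<Rightarrow> nat \<Rightarrow> nat" where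
  "fseq X p k = (if k = 0 then rf_enc p else chi X (k - 1))"

end

theory Submission
  imports Defs
begin


lemma evProj: "i < length xs \<Longrightarrow> y = xs ! i \<Longrightarrow> eval g (Proj i) xs y"
  using ev_proj by simp
lemma evSuc: "y = Suc (arg0 xs) \<Longrightarrow> eval g Suc_rf xs y"
  using ev_suc by simp
lemma evZer: "y = 0 \<Longrightarrow> eval g Zer xs y"
  using ev_zer by simp
lemma evOrc: "y = g (arg0 xs) \<Longrightarrow> eval g Orc xs y"
  using ev_orc by simp
lemma evComp1: "eval g P xs a \<Longrightarrow> eval g f [a] y \<Longrightarrow> eval g (Comp f [P]) xs y"
  by (rule ev_comp[where ys="[a]"]) auto
lemma evComp2: "eval g P xs a \<Longrightarrow> eval g Q xs b \<Longrightarrow> eval g f [a,b] y \<Longrightarrow> eval g (Comp f [P,Q]) xs y"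
  by (rule ev_comp[where ys="[a,b]"]) auto
lemma evComp0: "eval g f [] y \<Longrightarrow> eval g (Comp f []) xs y"
  by (rule ev_comp[where ys="[]"]) auto

definition ADD :: rf where "ADD = Prim (Proj 0) (Comp Suc_rf [Proj 0])"
lemma eval_ADD0: "eval g ADD [n, x] (n + x)"
proof (induction n)
  case 0 show ?case unfolding ADD_def by (rule ev_prim0, rule evProj) auto
next
  case (Suc n)
  show ?case unfolding ADD_def
    by (rule ev_primS[OF Suc[unfolded ADD_def]], rule evComp1, rule evProj) (auto intro!: evSuc simp: arg0_def)
qed
lemma eval_ADD: "y = n + x \<Longrightarrow> eval g ADD [n, x] y" using eval_ADD0 by simp

definition MULT :: rf where "MULT = Prim Zer (Comp ADD [Proj 0, Proj 2])"
lemma eval_MULT0: "eval g MULT [n, x] (n * x)"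
proof (induction n)
  case 0 show ?case unfolding MULT_def by (rule ev_prim0, rule evZer) auto
next
  case (Suc n)
  show ?case unfolding MULT_def
    by (rule ev_primS[OF Suc[unfolded MULT_def]], rule evComp2, (rule evProj, simp, simp)+, rule eval_ADD) simp
qed
lemma eval_MULT: "y = n * x \<Longrightarrow> eval g MULT [n, x] y" using eval_MULT0 by simp

definition PRED :: rf where "PRED = Prim Zer (Proj 1)"
lemma eval_PRED0: "eval g PRED [n] (n - 1)"
proof (cases n)
  case 0 show ?thesis unfolding PRED_def 0 by (rule ev_prim0, rule evZer) auto
next
  case (Suc m)
  have "eval g (Prim Zer (Proj 1)) [m] (m - 1)"
  proof (induction m)
    case 0 show ?case by (rule ev_prim0, rule evZer) auto
  next
    case (Suc k) show ?case by (rule ev_primS[OF Suc], rule evProj) auto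
  qed
  then show ?thesis unfolding PRED_def Suc by (rule ev_primS, intro evProj) auto
qed
lemma eval_PRED: "y = n - 1 \<Longrightarrow> eval g PRED [n] y" using eval_PRED0 by simp

definition SUBr :: rf where "SUBr = Prim (Proj 0) (Comp PRED [Proj 0])"
lemma eval_SUBr0: "eval g SUBr [b, a] (a - b)"
proof (induction b)
  case 0 show ?case unfolding SUBr_def by (rule ev_prim0, rule evProj) auto
next
  case (Suc n)
  show ?case unfolding SUBr_def
    by (rule ev_primS[OF Suc[unfolded SUBr_def]], rule evComp1, rule evProj, simp, simp, rule eval_PRED) simp
qed
definition SUB :: rf where "SUB = Comp SUBr [Proj 1, Proj 0]"
lemma eval_SUB: "y = a - b \<Longrightarrow> eval g SUB [a, b] y"
  unfolding SUB_def by (rule evComp2, (rule evProj, simp, simp)+) (simp add: eval_SUBr0)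

definition TRI :: rf where "TRI = Prim Zer (Comp ADD [Proj 0, Comp Suc_rf [Proj 1]])"
lemma eval_TRI0: "eval g TRI [n] (triangle n)"
proof (induction n)
  case 0 show ?case unfolding TRI_def by (rule ev_prim0, rule evZer) auto
next
  case (Suc n)
  show ?case unfolding TRI_def
    by (rule ev_primS[OF Suc[unfolded TRI_def]], rule evComp2, rule evProj, simp, simp,
        rule evComp1, rule evProj, simp, simp, rule evSuc, simp add: arg0_def, rule eval_ADD) simp
qed
lemma eval_TRI: "y = triangle n \<Longrightarrow> eval g TRI [n] y" using eval_TRI0 by simp

definition PAIR :: rf where "PAIR = Comp ADD [Comp TRI [Comp ADD [Proj 0, Proj 1]], Proj 0]"
lemma eval_PAIR: "y = prod_encode (a, b) \<Longrightarrow> eval g PAIR [a, b] y"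
proof -
  assume y: "y = prod_encode (a, b)"
  have 1: "eval g (Comp ADD [Proj 0, Proj 1]) [a,b] (a+b)"
    by (rule evComp2, (rule evProj, simp, simp)+, rule eval_ADD, rule refl)
  have 2: "eval g (Comp TRI [Comp ADD [Proj 0, Proj 1]]) [a,b] (triangle (a+b))"
    by (rule evComp1[OF 1], rule eval_TRI, rule refl)
  show ?thesis unfolding PAIR_def
    by (rule evComp2[OF 2], rule evProj, simp, simp, rule eval_ADD) (simp add: y prod_encode_def)
qed

section \<open>Unary computable functionals\<close>

definition recfn1 :: "((nat \<Rightarrow> nat) \<Rightarrow> nat \<Rightarrow> nat) \<Rightarrow> bool" where
  "recfn1 F \<longleftrightarrow> (\<exists>P. \<forall>g x. eval g P [x] (F g x))"

lemma recfn1I: "(\<And>g x. eval g P [x] (F g x)) \<Longrightarrow> recfn1 F"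
  unfolding recfn1_def by blast

fun cnst :: "nat \<Rightarrow> rf" where
  "cnst 0 = Zer" | "cnst (Suc c) = Comp Suc_rf [cnst c]"
lemma eval_cnst: "eval g (cnst c) [x] c"
proof (induction c)
  case 0 show ?case by (simp, rule evZer, rule refl)
next
  case (Suc c) show ?case by (simp, rule evComp1[OF Suc.IH], rule evSuc) (simp add: arg0_def)
qed

lemma rf_const: "recfn1 (\<lambda>g x. c)"
  by (rule recfn1I[OF eval_cnst])
lemma rf_id: "recfn1 (\<lambda>g x. x)"
  by (rule recfn1I[of "Proj 0"], rule evProj) auto

lemma rf_un: assumes "\<And>g a. eval g R [a] (h a)" "recfn1 F" shows "recfn1 (\<lambda>g x. h (F g x))"
proof -
  obtain P where P: "\<And>g x. eval g P [x] (F g x)" using assms(2) unfolding recfn1_def by blast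
  show ?thesis by (rule recfn1I[of "Comp R [P]"], rule evComp1[OF P assms(1)])
qed
lemma rf_bin: assumes "\<And>g a b. eval g R [a, b] (h a b)" "recfn1 F" "recfn1 G"
  shows "recfn1 (\<lambda>g x. h (F g x) (G g x))"
proof -
  obtain P where P: "\<And>g x. eval g P [x] (F g x)" using assms(2) unfolding recfn1_def by blast
  obtain Q where Q: "\<And>g x. eval g Q [x] (G g x)" using assms(3) unfolding recfn1_def by blast
  show ?thesis by (rule recfn1I[of "Comp R [P, Q]"], rule evComp2[OF P Q assms(1)])
qed
lemma rf_orc: assumes "recfn1 F" shows "recfn1 (\<lambda>g x. g (F g x))"
proof -
  obtain P where P: "\<And>g x. eval g P [x] (F g x)" using assms unfolding recfn1_def by blast
  show ?thesis by (rule recfn1I[of "Comp Orc [P]"], rule evComp1[OF P], rule evOrc) (simp add: arg0_def)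
qed
lemma rf_suc: "recfn1 F \<Longrightarrow> recfn1 (\<lambda>g x. Suc (F g x))"
  by (rule rf_un[where R=Suc_rf], rule evSuc) (auto simp: arg0_def)
lemma rf_add: "recfn1 F \<Longrightarrow> recfn1 G \<Longrightarrow> recfn1 (\<lambda>g x. F g x + G g x)"
  by (rule rf_bin[where R=ADD], rule eval_ADD) auto
lemma rf_mult: "recfn1 F \<Longrightarrow> recfn1 G \<Longrightarrow> recfn1 (\<lambda>g x. F g x * G g x)"
  by (rule rf_bin[where R=MULT], rule eval_MULT) auto
lemma rf_sub: "recfn1 F \<Longrightarrow> recfn1 G \<Longrightarrow> recfn1 (\<lambda>g x. F g x - G g x)"
  by (rule rf_bin[where R=SUB], rule eval_SUB) auto
lemma rf_tri: "recfn1 F \<Longrightarrow> recfn1 (\<lambda>g x. triangle (F g x))"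
  by (rule rf_un[where R=TRI], rule eval_TRI) auto

definition pe :: "nat \<Rightarrow> nat \<Rightarrow> nat" where "pe a b = prod_encode (a, b)"
definition pfst :: "nat \<Rightarrow> nat" where "pfst n = fst (prod_decode n)"
definition psnd :: "nat \<Rightarrow> nat" where "psnd n = snd (prod_decode n)"
lemma pfst_pe[simp]: "pfst (pe a b) = a" and psnd_pe[simp]: "psnd (pe a b) = b"
  by (simp_all add: pfst_def psnd_def pe_def)
lemma pe_surj: "pe (pfst n) (psnd n) = n"
  by (simp add: pfst_def psnd_def pe_def)
lemma pe_inj[simp]: "pe a b = pe c d \<longleftrightarrow> a = c \<and> b = d"
  by (metis pfst_pe psnd_pe)

lemma rf_pe: "recfn1 F \<Longrightarrow> recfn1 G \<Longrightarrow> recfn1 (\<lambda>g x. pe (F g x) (G g x))"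
  by (rule rf_bin[where R=PAIR], rule eval_PAIR) (auto simp: pe_def)

definition dtri :: "nat \<Rightarrow> nat" where "dtri n = (LEAST s. n < triangle (Suc s))"

lemma triangle_mono: "a \<le> b \<Longrightarrow> triangle a \<le> triangle b"
  by (induction b) (auto simp: le_Suc_eq)

lemma dtri_pe: "dtri (pe a b) = a + b"
proof -
  have n: "pe a b = triangle (a + b) + a" by (simp add: pe_def prod_encode_def)
  show ?thesis unfolding dtri_def
  proof (rule Least_equality)
    show "pe a b < triangle (Suc (a + b))" using n by simp
  next
    fix s assume "pe a b < triangle (Suc s)"
    then have "triangle (a+b) < triangle (Suc s)" using n by simp
    then show "a + b \<le> s" using triangle_mono[of "Suc s" "a+b"] by (metis not_less_eq_eq not_le)
  qed
qed

lemma pfst_formula: "pfst n = n - triangle (dtri n)"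
  by (subst (1 2) pe_surj[of n, symmetric], simp only: dtri_pe pfst_pe) (simp add: pe_def prod_encode_def)
lemma psnd_formula: "psnd n = dtri n - pfst n"
  by (subst (1 2) pe_surj[of n, symmetric], simp only: dtri_pe pfst_pe psnd_pe) 

definition DTRI :: rf where
  "DTRI = Mu (Comp SUB [Comp Suc_rf [Proj 1], Comp TRI [Comp Suc_rf [Proj 0]]])"
lemma eval_DTRI: "eval g DTRI [n] (dtri n)"
proof -
  let ?f = "Comp SUB [Comp Suc_rf [Proj 1], Comp TRI [Comp Suc_rf [Proj 0]]]"
  have e: "eval g ?f [k, n] (Suc n - triangle (Suc k))" for k
    by (rule evComp2, rule evComp1, rule evProj, simp, simp, rule evSuc, simp add: arg0_def,
        rule evComp1, rule evComp1, rule evProj, simp, simp, rule evSuc, simp add: arg0_def,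
        rule eval_TRI, rule refl, rule eval_SUB, rule refl)
  have ex: "\<exists>s. n < triangle (Suc s)"
    by (rule exI[of _ n]) (simp add: triangle_def)
  have l: "n < triangle (Suc (dtri n))" unfolding dtri_def by (rule LeastI_ex[OF ex])
  have m: "m < dtri n \<Longrightarrow> \<not> n < triangle (Suc m)" for m unfolding dtri_def by (rule not_less_Least)
  show ?thesis unfolding DTRI_def
  proof (rule ev_mu)
    show "eval g ?f [dtri n, n] 0" using e[of "dtri n"] l by simp
    show "\<forall>m<dtri n. \<exists>y. eval g ?f [m, n] (Suc y)"
    proof (intro allI impI)
      fix m assume "m < dtri n"
      have "\<not> n < triangle (Suc m)" by (rule m) fact
      then have "Suc n - triangle (Suc m) > 0" by linarith
      then show "\<exists>y. eval g ?f [m, n] (Suc y)" using e[of m] by (metis gr0_conv_Suc)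
    qed
  qed
qed
lemma rf_dtri: "recfn1 F \<Longrightarrow> recfn1 (\<lambda>g x. dtri (F g x))"
  by (rule rf_un[where R=DTRI], rule eval_DTRI)

lemma rf_pfst: "recfn1 F \<Longrightarrow> recfn1 (\<lambda>g x. pfst (F g x))"
  unfolding pfst_formula by (intro rf_sub rf_tri rf_dtri)
lemma rf_psnd: "recfn1 F \<Longrightarrow> recfn1 (\<lambda>g x. psnd (F g x))"
  unfolding psnd_formula by (intro rf_sub rf_dtri rf_pfst)

lemma rf_mu:
  assumes Q: "\<And>K X. recfn1 K \<Longrightarrow> recfn1 X \<Longrightarrow> recfn1 (\<lambda>g y. Q g (K g y) (X g y))"
    and ex: "\<And>g x. \<exists>k. Q g k x = 0"
  shows "recfn1 (\<lambda>g x. LEAST k. Q g k x = 0)"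
proof -
  have "recfn1 (\<lambda>g y. Q g (pfst y) (psnd y))" by (rule Q; rule rf_pfst rf_psnd; rule rf_id)
  then obtain P where P: "\<And>g y. eval g P [y] (Q g (pfst y) (psnd y))" unfolding recfn1_def by blast
  let ?f = "Comp P [Comp PAIR [Proj 0, Proj 1]]"
  have e: "eval g ?f [k, x] (Q g k x)" for g k x
    by (rule evComp1, rule evComp2, (rule evProj, simp, simp)+, rule eval_PAIR, rule refl)
       (use P[of g "prod_encode (k,x)"] in \<open>simp add: pe_def[symmetric]\<close>)
  show ?thesis
  proof (rule recfn1I[of "Mu ?f"], rule ev_mu)
    fix g x
    have "Q g (LEAST k. Q g k x = 0) x = 0" by (rule LeastI_ex[OF ex[of g x]])
    then show "eval g ?f [LEAST k. Q g k x = 0, x] 0" using e[of g "LEAST k. Q g k x = 0" x] by simp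
    show "\<forall>m<(LEAST k. Q g k x = 0). \<exists>y. eval g ?f [m, x] (Suc y)"
    proof (intro allI impI)
      fix m assume "m < (LEAST k. Q g k x = 0)"
      then have "Q g m x \<noteq> 0" by (rule not_less_Least)
      then obtain y where "Q g m x = Suc y" using not0_implies_Suc by blast
      then show "\<exists>y. eval g ?f [m, x] (Suc y)" using e[of g m x] by auto
    qed
  qed
qed



fun loop :: "(nat \<Rightarrow> nat \<Rightarrow> nat) \<Rightarrow> nat \<Rightarrow> nat \<Rightarrow> nat" where
  "loop h s 0 = s" | "loop h s (Suc k) = h k (loop h s k)"

lemma rf_loop:
  assumes N: "recfn1 N" and S: "recfn1 S"
    and H: "\<And>X K V. recfn1 X \<Longrightarrow> recfn1 K \<Longrightarrow> recfn1 V \<Longrightarrow> recfn1 (\<lambda>g y. H g (X g y) (K g y) (V g y))"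
  shows "recfn1 (\<lambda>g x. loop (H g x) (S g x) (N g x))"
proof -
  have "recfn1 (\<lambda>g y. H g (pfst y) (pfst (psnd y)) (psnd (psnd y)))"
    by (rule H; (rule rf_pfst rf_psnd)+; rule rf_id)
  then obtain PH where PH: "\<And>g y. eval g PH [y] (H g (pfst y) (pfst (psnd y)) (psnd (psnd y)))"
    unfolding recfn1_def by blast
  obtain PS where PS: "\<And>g x. eval g PS [x] (S g x)" using S unfolding recfn1_def by blast
  obtain PN where PN: "\<And>g x. eval g PN [x] (N g x)" using N unfolding recfn1_def by blast
  let ?h = "Comp PH [Comp PAIR [Proj 2, Comp PAIR [Proj 1, Proj 0]]]"
  have eh: "eval g ?h [r, k, x] (H g x k r)" for g r k x
    by (rule evComp1, rule evComp2, rule evProj, simp, simp, rule evComp2, (rule evProj, simp, simp)+,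
        rule eval_PAIR, rule refl, rule eval_PAIR, rule refl)
       (use PH[of g "prod_encode (x, prod_encode (k, r))"] in \<open>simp add: pe_def[symmetric]\<close>)
  have ep: "eval g (Prim PS ?h) [k, x] (loop (H g x) (S g x) k)" for g k x
  proof (induction k)
    case 0 show ?case by (simp, rule ev_prim0, rule PS)
  next
    case (Suc k) show ?case unfolding loop.simps by (rule ev_primS[OF Suc.IH], rule eh)
  qed
  show ?thesis
  proof (rule recfn1I)
    fix g x
    have pr: "eval g (Proj 0) [x] x" by (rule evProj) auto
    show "eval g (Comp (Prim PS ?h) [PN, Proj 0]) [x] (loop (H g x) (S g x) (N g x))"
      by (rule evComp2[OF PN[of g x] pr ep[of g "N g x" x]])
  qed
qed


definition recP :: "((nat \<Rightarrow> nat) \<Rightarrow> nat \<Rightarrow> bool) \<Rightarrow> bool" where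
  "recP P \<longleftrightarrow> recfn1 (\<lambda>g x. of_bool (P g x))"

lemma recfn1_cong: "recfn1 F \<Longrightarrow> (\<And>g x. F g x = G g x) \<Longrightarrow> recfn1 G"
proof -
  assume "recfn1 F" "\<And>g x. F g x = G g x"
  then have "F = G" by (auto simp: fun_eq_iff)
  with \<open>recfn1 F\<close> show ?thesis by simp
qed

lemma recP_cong: "recP P \<Longrightarrow> (\<And>g x. P g x \<longleftrightarrow> Q g x) \<Longrightarrow> recP Q"
  unfolding recP_def by (erule recfn1_cong) simp
lemma rp_less: "recfn1 F \<Longrightarrow> recfn1 G \<Longrightarrow> recP (\<lambda>g x. F g x < G g x)"
  unfolding recP_def
  by (rule recfn1_cong[of "\<lambda>g x. 1 - (1 - (G g x - F g x))"], intro rf_sub rf_const) auto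
lemma rp_not: "recP P \<Longrightarrow> recP (\<lambda>g x. \<not> P g x)"
  unfolding recP_def
  by (rule recfn1_cong[of "\<lambda>g x. 1 - of_bool (P g x)"], intro rf_sub rf_const) auto
lemma rp_conj: "recP P \<Longrightarrow> recP Q \<Longrightarrow> recP (\<lambda>g x. P g x \<and> Q g x)"
  unfolding recP_def
  by (rule recfn1_cong[of "\<lambda>g x. of_bool (P g x) * of_bool (Q g x)"], intro rf_mult) auto
lemma rp_disj: "recP P \<Longrightarrow> recP Q \<Longrightarrow> recP (\<lambda>g x. P g x \<or> Q g x)"
  unfolding recP_def
  by (rule recfn1_cong[of "\<lambda>g x. 1 - (1 - of_bool (P g x)) * (1 - of_bool (Q g x))"], intro rf_sub rf_mult rf_const) auto
lemma rp_const: "recP (\<lambda>g x. c)"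
  unfolding recP_def by (rule rf_const)
lemma rp_le: "recfn1 F \<Longrightarrow> recfn1 G \<Longrightarrow> recP (\<lambda>g x. F g x \<le> G g x)"
  by (rule recP_cong[of "\<lambda>g x. \<not> G g x < F g x"], rule rp_not, rule rp_less) auto
lemma rp_eq: "recfn1 F \<Longrightarrow> recfn1 G \<Longrightarrow> recP (\<lambda>g x. F g x = G g x)"
proof -
  assume a: "recfn1 F" "recfn1 G"
  have "recP (\<lambda>g x. F g x \<le> G g x \<and> G g x \<le> F g x)" by (intro rp_conj rp_le a)
  then show ?thesis by (rule recP_cong) auto
qed
lemma rp_imp: "recP P \<Longrightarrow> recP Q \<Longrightarrow> recP (\<lambda>g x. P g x \<longrightarrow> Q g x)"
  by (rule recP_cong[of "\<lambda>g x. \<not> P g x \<or> Q g x"], rule rp_disj, rule rp_not) auto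
lemma rp_iff: "recP P \<Longrightarrow> recP Q \<Longrightarrow> recP (\<lambda>g x. P g x \<longleftrightarrow> Q g x)"
proof -
  assume a: "recP P" "recP Q"
  have "recP (\<lambda>g x. (P g x \<longrightarrow> Q g x) \<and> (Q g x \<longrightarrow> P g x))" by (intro rp_conj rp_imp a)
  then show ?thesis by (rule recP_cong) auto
qed
lemma rf_if: "recP P \<Longrightarrow> recfn1 F \<Longrightarrow> recfn1 G \<Longrightarrow> recfn1 (\<lambda>g x. if P g x then F g x else G g x)"
  unfolding recP_def
  by (rule recfn1_cong[of "\<lambda>g x. of_bool (P g x) * F g x + (1 - of_bool (P g x)) * G g x"],
      intro rf_add rf_mult rf_sub rf_const) auto
lemma rf_ofbool: "recP P \<Longrightarrow> recfn1 (\<lambda>g x. of_bool (P g x))"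
  unfolding recP_def .

lemma loop_ball: "loop (\<lambda>k s. s * of_bool (P k)) 1 n = of_bool (\<forall>k<n. P k)"
  by (induction n) (auto simp: less_Suc_eq)

lemma rp_ball:
  assumes N: "recfn1 N"
    and P: "\<And>K X. recfn1 K \<Longrightarrow> recfn1 X \<Longrightarrow> recP (\<lambda>g y. P g (K g y) (X g y))"
  shows "recP (\<lambda>g x. \<forall>k<N g x. P g k x)"
proof -
  have "recfn1 (\<lambda>g x. loop (\<lambda>k s. s * of_bool (P g k x)) 1 (N g x))"
    by (rule rf_loop[OF N rf_const], rule rf_mult, assumption, rule rf_ofbool, rule P)
  then show ?thesis unfolding recP_def loop_ball .
qed

lemma rp_bex:
  assumes N: "recfn1 N"
    and P: "\<And>K X. recfn1 K \<Longrightarrow> recfn1 X \<Longrightarrow> recP (\<lambda>g y. P g (K g y) (X g y))"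
  shows "recP (\<lambda>g x. \<exists>k<N g x. P g k x)"
proof -
  have "recP (\<lambda>g x. \<not> (\<forall>k<N g x. \<not> P g k x))"
    by (rule rp_not, rule rp_ball[OF N], rule rp_not, rule P)
  then show ?thesis by simp
qed

lemma rf_comp: assumes "recfn1 H" "recfn1 F" shows "recfn1 (\<lambda>g x. H g (F g x))"
proof -
  obtain P where P: "\<And>g x. eval g P [x] (H g x)" using assms(1) unfolding recfn1_def by blast
  obtain Q where Q: "\<And>g x. eval g Q [x] (F g x)" using assms(2) unfolding recfn1_def by blast
  show ?thesis by (rule recfn1I[of "Comp P [Q]"], rule evComp1[OF Q P])
qed

lemma rf_div2: "recfn1 F \<Longrightarrow> recfn1 (\<lambda>g x. F g x div 2)"
proof -
  assume F: "recfn1 F"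
  have ex: "\<exists>k. x - (2 * k + 1) = 0" for x :: nat by (rule exI[of _ x]) simp
  have "recfn1 (\<lambda>g x. LEAST k. x - (2 * k + 1) = 0)"
    by (rule rf_mu[where Q="\<lambda>g k x. x - (2*k+1)", OF _ ex], intro rf_sub rf_add rf_mult rf_const, assumption+)
  moreover have "(LEAST k. x - (2 * k + 1) = 0) = x div 2" for x :: nat
  proof (rule Least_equality)
    show "x - (2 * (x div 2) + 1) = 0" by presburger
    fix y assume "x - (2 * y + 1) = 0" then show "x div 2 \<le> y" by presburger
  qed
  ultimately have "recfn1 (\<lambda>g x. x div 2)" by (rule recfn1_cong)
  from rf_comp[OF this F] show ?thesis .
qed


lemma rp_even: "recfn1 F \<Longrightarrow> recP (\<lambda>g x. even (F g x))"
proof -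
  assume F: "recfn1 F"
  have "recP (\<lambda>g x. F g x = 2 * (F g x div 2))" by (intro rp_eq rf_mult rf_const rf_div2 F)
  moreover have e: "(n = 2 * (n div 2)) = even n" for n :: nat by presburger
  ultimately show ?thesis by (rule recP_cong)
qed

section \<open>Lists\<close>

definition lcons :: "nat \<Rightarrow> nat \<Rightarrow> nat" where "lcons x l = Suc (pe x l)"
definition lhd :: "nat \<Rightarrow> nat" where "lhd l = pfst (l - 1)"
definition ltl :: "nat \<Rightarrow> nat" where "ltl l = psnd (l - 1)"

lemma lhd_lcons[simp]: "lhd (lcons x l) = x" and ltl_lcons[simp]: "ltl (lcons x l) = l"
  by (simp_all add: lhd_def ltl_def lcons_def)
lemma lcons_nz[simp]: "lcons x l \<noteq> 0" by (simp add: lcons_def)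
lemma list_encode_Cons': "list_encode (x # xs) = lcons x (list_encode xs)"
  by (simp add: lcons_def pe_def)
declare list_encode.simps(2)[simp del] list_encode_Cons'[simp]
lemma list_encode_eq0[simp]: "list_encode xs = 0 \<longleftrightarrow> xs = []"
  by (cases xs) auto
lemma prod_decode_0: "prod_decode 0 = (0, 0)"
  using prod_encode_inverse[of "(0,0)"] by (simp add: prod_encode_def)
lemma ltl_0[simp]: "ltl 0 = 0"
  unfolding ltl_def psnd_def using prod_decode_0 by simp
lemma lhd_0[simp]: "lhd 0 = 0"
  unfolding lhd_def pfst_def using prod_decode_0 by simp
lemma ltl_enc: "ltl (list_encode xs) = list_encode (tl xs)"
  by (cases xs) (simp_all del: list_encode.simps add: list_encode.simps(1) list_encode_Cons')
lemma lhd_enc: "xs \<noteq> [] \<Longrightarrow> lhd (list_encode xs) = hd xs"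
  by (cases xs) (simp_all del: list_encode.simps add: list_encode_Cons')

lemma triangle_ge: "n \<le> triangle n"
  by (induction n) auto
lemma psnd_le: "psnd n \<le> n"
proof -
  have "n = pe (pfst n) (psnd n)" by (simp add: pe_surj)
  also have "\<dots> = triangle (pfst n + psnd n) + pfst n" by (simp add: pe_def prod_encode_def)
  finally show ?thesis using triangle_ge[of "pfst n + psnd n"] by linarith
qed
lemma pe_ge2: "b \<le> pe a b"
  using psnd_le[of "pe a b"] by simp
lemma ltl_less: "l \<noteq> 0 \<Longrightarrow> ltl l < l"
  unfolding ltl_def using psnd_le[of "l - 1"] by linarith
lemma ltl_le: "ltl l \<le> l"
  using ltl_less[of l] by (cases "l = 0") auto

definition ldrop :: "nat \<Rightarrow> nat \<Rightarrow> nat" where "ldrop l k = loop (\<lambda>_ s. ltl s) l k"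
lemma ldrop_enc: "ldrop (list_encode xs) k = list_encode (drop k xs)"
  unfolding ldrop_def by (induction k) (auto simp: ltl_enc drop_Suc tl_drop)
lemma ldrop_le: "ldrop l k \<le> l - k"
proof (induction k)
  case 0 show ?case by (simp add: ldrop_def)
next
  case (Suc k)
  have "ldrop l (Suc k) = ltl (ldrop l k)" by (simp add: ldrop_def)
  moreover have "ltl (ldrop l k) < ldrop l k \<or> ldrop l k = 0" using ltl_less by blast
  ultimately show ?case using Suc by auto
qed

definition lnth :: "nat \<Rightarrow> nat \<Rightarrow> nat" where "lnth l i = lhd (ldrop l i)"
lemma lnth_enc: "i < length xs \<Longrightarrow> lnth (list_encode xs) i = xs ! i"
  by (simp add: lnth_def ldrop_enc lhd_enc hd_drop_conv_nth)

definition llen :: "nat \<Rightarrow> nat" where "llen l = (LEAST k. ldrop l k = 0)"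
lemma llen_enc: "llen (list_encode xs) = length xs"
  unfolding llen_def ldrop_enc
  by (rule Least_equality) auto

definition lrev_step :: "nat \<Rightarrow> nat \<Rightarrow> nat" where
  "lrev_step k s = (if pfst s = 0 then s else pe (ltl (pfst s)) (lcons (lhd (pfst s)) (psnd s)))"
definition lrev :: "nat \<Rightarrow> nat" where "lrev l = psnd (loop lrev_step (pe l 0) l)"

lemma lrev_loop: "loop lrev_step (pe (list_encode xs) 0) k = pe (list_encode (drop k xs)) (list_encode (rev (take k xs)))"
proof (induction k)
  case 0 show ?case by simp
next
  case (Suc k)
  show ?case
  proof (cases "k < length xs")
    case True
    then obtain ys where d: "drop k xs = xs ! k # ys" by (metis Cons_nth_drop_Suc)
    then have d2: "drop (Suc k) xs = ys" by (metis drop_Suc list.sel(3) tl_drop)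
    show ?thesis using True by (simp only: loop.simps Suc.IH) (simp add: lrev_step_def d d2 take_Suc_conv_app_nth)
  next
    case False
    then show ?thesis by (simp only: loop.simps Suc.IH) (simp add: lrev_step_def)
  qed
qed
lemma list_encode_ge: "length xs \<le> list_encode xs"
proof (induction xs)
  case Nil then show ?case by simp
next
  case (Cons x xs) then show ?case using pe_ge2[of "list_encode xs" x] by (simp add: list_encode_Cons' lcons_def)
qed
lemma lrev_enc: "lrev (list_encode xs) = list_encode (rev xs)"
  unfolding lrev_def lrev_loop using list_encode_ge[of xs] by simp

definition lsnoc :: "nat \<Rightarrow> nat \<Rightarrow> nat" where "lsnoc l v = lrev (lcons v (lrev l))"
lemma lsnoc_enc: "lsnoc (list_encode xs) v = list_encode (xs @ [v])"
  unfolding lsnoc_def lrev_enc list_encode_Cons'[symmetric] lrev_enc by simp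

lemma rf_lcons: "recfn1 F \<Longrightarrow> recfn1 G \<Longrightarrow> recfn1 (\<lambda>g x. lcons (F g x) (G g x))"
  unfolding lcons_def by (intro rf_suc rf_pe)
lemma rf_lhd: "recfn1 F \<Longrightarrow> recfn1 (\<lambda>g x. lhd (F g x))"
  unfolding lhd_def by (intro rf_pfst rf_sub rf_const)
lemma rf_ltl: "recfn1 F \<Longrightarrow> recfn1 (\<lambda>g x. ltl (F g x))"
  unfolding ltl_def by (intro rf_psnd rf_sub rf_const)
lemma rf_ldrop: "recfn1 L \<Longrightarrow> recfn1 K \<Longrightarrow> recfn1 (\<lambda>g x. ldrop (L g x) (K g x))"
  unfolding ldrop_def by (rule rf_loop, assumption, assumption, rule rf_ltl)
lemma rf_lnth: "recfn1 L \<Longrightarrow> recfn1 K \<Longrightarrow> recfn1 (\<lambda>g x. lnth (L g x) (K g x))"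
  unfolding lnth_def by (intro rf_lhd rf_ldrop)
lemma rf_llen: "recfn1 L \<Longrightarrow> recfn1 (\<lambda>g x. llen (L g x))"
proof -
  assume L: "recfn1 L"
  have ex: "\<exists>k. ldrop x k = 0" for x using ldrop_le[of x x] by auto
  have "recfn1 (\<lambda>g x. LEAST k. ldrop x k = 0)"
    by (rule rf_mu[where Q="\<lambda>g k x. ldrop x k", OF _ ex], rule rf_ldrop)
  then have "recfn1 (\<lambda>g x. llen x)" unfolding llen_def .
  from rf_comp[OF this L] show ?thesis .
qed
lemma rf_lrev: "recfn1 L \<Longrightarrow> recfn1 (\<lambda>g x. lrev (L g x))"
  unfolding lrev_def lrev_step_def
  by (rule rf_psnd, rule rf_loop, assumption, intro rf_pe rf_const, assumption,
      intro rf_if rp_eq rf_pe rf_pfst rf_ltl rf_lcons rf_lhd rf_psnd rf_const)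
lemma rf_lsnoc: "recfn1 L \<Longrightarrow> recfn1 V \<Longrightarrow> recfn1 (\<lambda>g x. lsnoc (L g x) (V g x))"
  unfolding lsnoc_def by (intro rf_lrev rf_lcons)




section \<open>Small-step machine\<close>

datatype frame = FC rf "rf list" "nat list" "nat list" | FP rf nat "nat list" | FM rf nat "nat list"
datatype mode = Ev rf "nat list" | Rt nat

fun step :: "(nat \<Rightarrow> nat) \<Rightarrow> mode \<times> frame list \<Rightarrow> mode \<times> frame list" where
  "step g (Ev Zer xs, st) = (Rt 0, st)"
| "step g (Ev Suc_rf xs, st) = (Rt (Suc (arg0 xs)), st)"
| "step g (Ev (Proj i) xs, st) = (if i < length xs then (Rt (xs ! i), st) else (Ev (Proj i) xs, st))"
| "step g (Ev Orc xs, st) = (Rt (g (arg0 xs)), st)"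
| "step g (Ev (Comp f []) xs, st) = (Ev f [], st)"
| "step g (Ev (Comp f (h # hs)) xs, st) = (Ev h xs, FC f hs xs [] # st)"
| "step g (Ev (Prim f h) [], st) = (Ev (Prim f h) [], st)"
| "step g (Ev (Prim f h) (0 # xs), st) = (Ev f xs, st)"
| "step g (Ev (Prim f h) (Suc n # xs), st) = (Ev (Prim f h) (n # xs), FP h n xs # st)"
| "step g (Ev (Mu f) xs, st) = (Ev f (0 # xs), FM f 0 xs # st)"
| "step g (Rt v, []) = (Rt v, [])"
| "step g (Rt v, FC f [] xs ys # st) = (Ev f (ys @ [v]), st)"
| "step g (Rt v, FC f (h # hs) xs ys # st) = (Ev h xs, FC f hs xs (ys @ [v]) # st)"
| "step g (Rt v, FP h n xs # st) = (Ev h (v # n # xs), st)"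
| "step g (Rt v, FM f k xs # st) = (if v = 0 then (Rt k, st) else (Ev f (Suc k # xs), FM f (Suc k) xs # st))"

definition run :: "(nat \<Rightarrow> nat) \<Rightarrow> nat \<Rightarrow> mode \<times> frame list \<Rightarrow> mode \<times> frame list" where
  "run g t s = (step g ^^ t) s"

lemma run_0[simp]: "run g 0 s = s" by (simp add: run_def)
lemma run_Suc: "run g (Suc t) s = run g t (step g s)"
  by (simp only: run_def funpow_Suc_right comp_apply)
lemma run_add: "run g (a + b) s = run g b (run g a s)"
  by (simp only: run_def add.commute[of a b] funpow_add comp_apply)
lemma run_step1: "run g 1 s = step g s" by (simp add: run_def)
lemma run_one[simp]: "run g (Suc 0) s = step g s" by (simp add: run_def)

lemma run_trans: "run g a s = s' \<Longrightarrow> run g b s' = s'' \<Longrightarrow> run g (a + b) s = s''"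
  by (simp add: run_add)

lemma comp_args:
  assumes "list_all2 (\<lambda>h y. \<forall>st. \<exists>t. run g t (Ev h xs, st) = (Rt y, st)) (h # hs) (y # ys)"
  shows "\<exists>t. run g t (Ev h xs, FC f hs xs acc # st) = (Ev f (acc @ y # ys), st)"
  using assms
proof (induction hs arbitrary: h y ys acc)
  case Nil
  then have ys: "ys = []" by simp
  from Nil obtain t where t: "run g t (Ev h xs, FC f [] xs acc # st) = (Rt y, FC f [] xs acc # st)" by auto
  have "run g (t + 1) (Ev h xs, FC f [] xs acc # st) = (Ev f (acc @ [y]), st)"
    by (rule run_trans[OF t]) (simp add: run_step1)
  then show ?case using ys by blast
next
  case (Cons h' hs)
  from Cons.prems obtain y' ys' where ys: "ys = y' # ys'" by (cases ys) auto
  from Cons.prems obtain t where t: "run g t (Ev h xs, FC f (h' # hs) xs acc # st) = (Rt y, FC f (h' # hs) xs acc # st)" by auto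
  have "list_all2 (\<lambda>h y. \<forall>st. \<exists>t. run g t (Ev h xs, st) = (Rt y, st)) (h' # hs) (y' # ys')"
    using Cons.prems ys by simp
  from Cons.IH[OF this] obtain t2 where t2: "run g t2 (Ev h' xs, FC f hs xs (acc @ [y]) # st) = (Ev f ((acc @ [y]) @ y' # ys'), st)" by blast
  have "run g (t + 1 + t2) (Ev h xs, FC f (h' # hs) xs acc # st) = (Ev f ((acc @ [y]) @ y' # ys'), st)"
    by (rule run_trans[OF run_trans[OF t] t2]) (simp add: run_step1)
  then show ?case using ys by auto
qed

lemma mu_run:
  assumes f0: "\<forall>st. \<exists>t. run g t (Ev f (n # xs), st) = (Rt 0, st)"
    and fs: "\<forall>m<n. \<exists>y. \<forall>st. \<exists>t. run g t (Ev f (m # xs), st) = (Rt (Suc y), st)"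
  shows "k \<le> n \<Longrightarrow> \<exists>t. run g t (Ev f (k # xs), FM f k xs # st) = (Rt n, st)"
proof (induction "n - k" arbitrary: k)
  case 0
  then have k: "k = n" by simp
  from f0 obtain t where t: "run g t (Ev f (n # xs), FM f n xs # st) = (Rt 0, FM f n xs # st)" by blast
  have "run g (t + 1) (Ev f (n # xs), FM f n xs # st) = (Rt n, st)"
    by (rule run_trans[OF t]) (simp add: run_step1)
  then show ?case using k by blast
next
  case (Suc d)
  then have kn: "k < n" by simp
  from fs kn obtain y where "\<forall>st. \<exists>t. run g t (Ev f (k # xs), st) = (Rt (Suc y), st)" by blast
  then obtain t where t: "run g t (Ev f (k # xs), FM f k xs # st) = (Rt (Suc y), FM f k xs # st)" by blast
  have d: "d = n - Suc k" using Suc.hyps(2) by arith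
  have sk: "Suc k \<le> n" using kn by simp
  from Suc.hyps(1)[OF d sk] obtain t2 where
    t2: "run g t2 (Ev f (Suc k # xs), FM f (Suc k) xs # st) = (Rt n, st)" by blast
  have "run g (t + 1 + t2) (Ev f (k # xs), FM f k xs # st) = (Rt n, st)"
    by (rule run_trans[OF run_trans[OF t] t2]) (simp add: run_step1)
  then show ?case by blast
qed

lemma eval_run: "eval g p xs y \<Longrightarrow> \<forall>st. \<exists>t. run g t (Ev p xs, st) = (Rt y, st)"
proof (induction rule: eval.induct)
  case (ev_zer xs) show ?case by (intro allI exI[of _ "Suc 0"]) simp
next
  case (ev_suc xs) show ?case by (intro allI exI[of _ "Suc 0"]) simp
next
  case (ev_proj i xs) then show ?case by (intro allI exI[of _ "Suc 0"]) simp
next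
  case (ev_orc xs) show ?case by (intro allI exI[of _ "Suc 0"]) simp
next
  case (ev_comp xs hs ys f y)
  show ?case
  proof
    fix st
    from ev_comp.IH obtain t2 where t2: "run g t2 (Ev f ys, st) = (Rt y, st)" by blast
    show "\<exists>t. run g t (Ev (Comp f hs) xs, st) = (Rt y, st)"
    proof (cases hs)
      case Nil
      then have "ys = []" using ev_comp.IH(1) by simp
      then have "run g (1 + t2) (Ev (Comp f hs) xs, st) = (Rt y, st)"
        using Nil by (intro run_trans[OF _ t2]) (simp add: run_step1)
      then show ?thesis by blast
    next
      case (Cons h hs')
      with ev_comp.IH(1) obtain y1 ys' where ys: "ys = y1 # ys'" by (cases ys) auto
      have la: "list_all2 (\<lambda>h y. \<forall>st. \<exists>t. run g t (Ev h xs, st) = (Rt y, st)) (h # hs') (y1 # ys')"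
        using ev_comp.IH(1) Cons ys by (auto elim: list_all2_mono)
      from comp_args[OF la, of f "[]" st] obtain t1 where
        t1: "run g t1 (Ev h xs, FC f hs' xs [] # st) = (Ev f (y1 # ys'), st)" by auto
      have "run g (1 + t1 + t2) (Ev (Comp f hs) xs, st) = (Rt y, st)"
        using Cons ys by (intro run_trans[OF run_trans[OF _ t1] t2[unfolded ys]]) (simp add: run_step1)
      then show ?thesis by blast
    qed
  qed
next
  case (ev_prim0 f xs y h)
  show ?case
  proof
    fix st
    from ev_prim0.IH obtain t where t: "run g t (Ev f xs, st) = (Rt y, st)" by blast
    have "run g (1 + t) (Ev (Prim f h) (0 # xs), st) = (Rt y, st)"
      by (intro run_trans[OF _ t]) (simp add: run_step1)
    then show "\<exists>t. run g t (Ev (Prim f h) (0 # xs), st) = (Rt y, st)" by blast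
  qed
next
  case (ev_primS f h n xs r y)
  show ?case
  proof
    fix st
    from ev_primS.IH(1) obtain t1 where t1: "run g t1 (Ev (Prim f h) (n # xs), FP h n xs # st) = (Rt r, FP h n xs # st)" by blast
    from ev_primS.IH(2) obtain t2 where t2: "run g t2 (Ev h (r # n # xs), st) = (Rt y, st)" by blast
    have "run g (1 + t1 + 1 + t2) (Ev (Prim f h) (Suc n # xs), st) = (Rt y, st)"
      by (intro run_trans[OF run_trans[OF run_trans[OF _ t1]] t2]) (simp_all add: run_step1)
    then show "\<exists>t. run g t (Ev (Prim f h) (Suc n # xs), st) = (Rt y, st)" by blast
  qed
next
  case (ev_mu f n xs)
  show ?case
  proof
    fix st
    have fs: "\<forall>m<n. \<exists>y. \<forall>st. \<exists>t. run g t (Ev f (m # xs), st) = (Rt (Suc y), st)"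
      using ev_mu.IH(2) by blast
    from mu_run[OF ev_mu.IH(1) fs, of 0 st] obtain t where
      t: "run g t (Ev f (0 # xs), FM f 0 xs # st) = (Rt n, st)" by auto
    have "run g (1 + t) (Ev (Mu f) xs, st) = (Rt n, st)"
      by (intro run_trans[OF _ t]) (simp add: run_step1)
    then show "\<exists>t. run g t (Ev (Mu f) xs, st) = (Rt n, st)" by blast
  qed
qed

lemma run_final: "run g t (Rt v, []) = (Rt v, [])"
  by (induction t) (simp_all add: run_Suc)

lemma run_det: "run g t1 s = (Rt a, []) \<Longrightarrow> run g t2 s = (Rt b, []) \<Longrightarrow> a = b"
proof (cases "t1 \<le> t2")
  case True
  assume 1: "run g t1 s = (Rt a, [])" and 2: "run g t2 s = (Rt b, [])"
  have "run g t2 s = run g (t2 - t1) (run g t1 s)" using True run_add[of g t1 "t2 - t1" s] by simp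
  then show ?thesis using 1 2 run_final by simp
next
  case False
  assume 1: "run g t1 s = (Rt a, [])" and 2: "run g t2 s = (Rt b, [])"
  have "run g t1 s = run g (t1 - t2) (run g t2 s)" using False run_add[of g t2 "t1 - t2" s] by simp
  then show ?thesis using 1 2 run_final by simp
qed

fun qry :: "mode \<times> frame list \<Rightarrow> nat" where
  "qry (Ev Orc xs, st) = arg0 xs"
| "qry s = 0"

lemma step_local: "g' (qry s) = g (qry s) \<Longrightarrow> step g' s = step g s"
  by (induction g s rule: step.induct) auto

lemma run_local: "\<exists>N. \<forall>g'. (\<forall>k<N. g' k = g k) \<longrightarrow> run g' t s = run g t s"
proof (induction t arbitrary: s)
  case 0 show ?case by simp
next
  case (Suc t)
  from Suc.IH[of "step g s"] obtain N where N: "\<forall>g'. (\<forall>k<N. g' k = g k) \<longrightarrow> run g' t (step g s) = run g t (step g s)" by blast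
  show ?case
  proof (rule exI[of _ "max N (Suc (qry s))"], intro allI impI)
    fix g' assume a: "\<forall>k<max N (Suc (qry s)). g' k = g k"
    then have st: "step g' s = step g s" by (intro step_local) auto
    have a1: "\<forall>k<N. g' k = g k" using a by simp
    have r: "run g' t (step g s) = run g t (step g s)" using N a1 by blast
    show "run g' (Suc t) s = run g (Suc t) s" by (simp only: run_Suc st r)
  qed
qed




section \<open>Numeric encoding of machine states\<close>

lemma rf_enc_pe:
  "rf_enc Zer = pe 0 0" "rf_enc Suc_rf = pe 1 0" "rf_enc (Proj i) = pe 2 i"
  "rf_enc (Comp f hs) = pe 3 (pe (rf_enc f) (list_encode (map rf_enc hs)))"
  "rf_enc (Prim f h) = pe 4 (pe (rf_enc f) (rf_enc h))"
  "rf_enc (Mu f) = pe 5 (rf_enc f)" "rf_enc Orc = pe 6 0"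
  by (simp_all add: pe_def)
declare rf_enc.simps[simp del] rf_enc_pe[simp]

fun enc_mode :: "mode \<Rightarrow> nat" where
  "enc_mode (Ev p xs) = pe 0 (pe (rf_enc p) (list_encode xs))"
| "enc_mode (Rt v) = pe 1 v"

fun enc_frame :: "frame \<Rightarrow> nat" where
  "enc_frame (FC f hs xs ys) = pe 0 (pe (rf_enc f) (pe (list_encode (map rf_enc hs)) (pe (list_encode xs) (list_encode ys))))"
| "enc_frame (FP h n xs) = pe 1 (pe (rf_enc h) (pe n (list_encode xs)))"
| "enc_frame (FM f k xs) = pe 2 (pe (rf_enc f) (pe k (list_encode xs)))"

definition enc :: "mode \<times> frame list \<Rightarrow> nat" where
  "enc s = pe (enc_mode (fst s)) (list_encode (map enc_frame (snd s)))"

definition arg0n :: "nat \<Rightarrow> nat" where "arg0n l = (if l = 0 then 0 else lhd l)"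
lemma arg0n_enc[simp]: "arg0n (list_encode xs) = arg0 xs"
  by (cases xs) (simp_all add: arg0n_def arg0_def)

definition nstep_ev :: "(nat \<Rightarrow> nat) \<Rightarrow> nat \<Rightarrow> nat \<Rightarrow> nat \<Rightarrow> nat \<Rightarrow> nat" where
  "nstep_ev orc pc xs st x =
    (if pfst pc = 0 then pe (pe 1 0) st
     else if pfst pc = 1 then pe (pe 1 (Suc (arg0n xs))) st
     else if pfst pc = 2 then (if psnd pc < llen xs then pe (pe 1 (lnth xs (psnd pc))) st else x)
     else if pfst pc = 3 then
       (if psnd (psnd pc) = 0 then pe (pe 0 (pe (pfst (psnd pc)) 0)) st
        else pe (pe 0 (pe (lhd (psnd (psnd pc))) xs))
                (lcons (pe 0 (pe (pfst (psnd pc)) (pe (ltl (psnd (psnd pc))) (pe xs 0)))) st))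
     else if pfst pc = 4 then
       (if xs = 0 then x
        else if lhd xs = 0 then pe (pe 0 (pe (pfst (psnd pc)) (ltl xs))) st
        else pe (pe 0 (pe pc (lcons (lhd xs - 1) (ltl xs))))
                (lcons (pe 1 (pe (psnd (psnd pc)) (pe (lhd xs - 1) (ltl xs)))) st))
     else if pfst pc = 5 then
       pe (pe 0 (pe (psnd pc) (lcons 0 xs))) (lcons (pe 2 (pe (psnd pc) (pe 0 xs))) st)
     else if pfst pc = 6 then pe (pe 1 (orc (arg0n xs))) st
     else x)"

definition nstep_rt :: "nat \<Rightarrow> nat \<Rightarrow> nat \<Rightarrow> nat" where
  "nstep_rt v st x =
    (if st = 0 then x
     else if pfst (lhd st) = 0 then
       (if pfst (psnd (psnd (lhd st))) = 0
        then pe (pe 0 (pe (pfst (psnd (lhd st))) (lsnoc (psnd (psnd (psnd (psnd (lhd st))))) v))) (ltl st)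
        else pe (pe 0 (pe (lhd (pfst (psnd (psnd (lhd st))))) (pfst (psnd (psnd (psnd (lhd st)))))))
                (lcons (pe 0 (pe (pfst (psnd (lhd st))) (pe (ltl (pfst (psnd (psnd (lhd st)))))
                    (pe (pfst (psnd (psnd (psnd (lhd st))))) (lsnoc (psnd (psnd (psnd (psnd (lhd st))))) v)))))
                  (ltl st)))
     else if pfst (lhd st) = 1 then
       pe (pe 0 (pe (pfst (psnd (lhd st))) (lcons v (lcons (pfst (psnd (psnd (lhd st)))) (psnd (psnd (psnd (lhd st)))))))) (ltl st)
     else
       (if v = 0 then pe (pe 1 (pfst (psnd (psnd (lhd st))))) (ltl st)
        else pe (pe 0 (pe (pfst (psnd (lhd st))) (lcons (Suc (pfst (psnd (psnd (lhd st))))) (psnd (psnd (psnd (lhd st)))))))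
                (lcons (pe 2 (pe (pfst (psnd (lhd st))) (pe (Suc (pfst (psnd (psnd (lhd st))))) (psnd (psnd (psnd (lhd st)))))))
                  (ltl st))))"

definition nstep :: "(nat \<Rightarrow> nat) \<Rightarrow> nat \<Rightarrow> nat" where
  "nstep orc x = (if pfst (pfst x) = 0 then nstep_ev orc (pfst (psnd (pfst x))) (psnd (psnd (pfst x))) (psnd x) x
                  else nstep_rt (psnd (pfst x)) (psnd x) x)"

lemma nstep_enc: "nstep orc (enc s) = enc (step orc s)"
  by (induction orc s rule: step.induct)
     (simp_all add: nstep_def nstep_ev_def nstep_rt_def enc_def llen_enc lnth_enc lsnoc_enc)


lemma rf_arg0n: "recfn1 F \<Longrightarrow> recfn1 (\<lambda>g x. arg0n (F g x))"
  unfolding arg0n_def by (intro rf_if rp_eq rf_const rf_lhd)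

lemma rf_nstep:
  assumes Or: "\<And>K. recfn1 K \<Longrightarrow> recfn1 (\<lambda>g y. Or g y (K g y))" and X: "recfn1 X"
  shows "recfn1 (\<lambda>g y. nstep (Or g y) (X g y))"
  unfolding nstep_def nstep_ev_def nstep_rt_def
  by (intro rf_if rp_eq rp_less rf_pe rf_pfst rf_psnd rf_const rf_lcons rf_lhd rf_ltl rf_lnth
      rf_llen rf_lsnoc rf_suc rf_sub rf_arg0n Or X)

definition nrun :: "(nat \<Rightarrow> nat) \<Rightarrow> nat \<Rightarrow> nat \<Rightarrow> nat" where
  "nrun orc t x = loop (\<lambda>_ s. nstep orc s) x t"

lemma nrun_enc: "nrun orc t (enc s) = enc (run orc t s)"
proof (induction t)
  case 0 show ?case by (simp add: nrun_def)
next
  case (Suc t)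
  have "run orc (Suc t) s = step orc (run orc t s)"
    using run_add[of orc t 1 s] by (simp add: run_step1)
  then show ?case using Suc by (simp add: nrun_def nstep_enc)
qed

lemma rf_nrun:
  assumes Or: "\<And>K Y. recfn1 K \<Longrightarrow> recfn1 Y \<Longrightarrow> recfn1 (\<lambda>g y. Or g (Y g y) (K g y))"
    and T: "recfn1 T" and X: "recfn1 X" and Z: "recfn1 Z"
  shows "recfn1 (\<lambda>g y. nrun (Or g (Z g y)) (T g y) (X g y))"
  unfolding nrun_def
  by (rule rf_loop[OF T X], rule rf_nstep, (rule Or | rule rf_comp[OF Z] | assumption)+)




section \<open>Rational codes\<close>

definition ip :: "nat \<Rightarrow> nat" where "ip n = (if even n then n div 2 else 0)"
definition iN :: "nat \<Rightarrow> nat" where "iN n = (if even n then 0 else n div 2 + 1)"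

lemma int_decode_ip: "int_decode n = int (ip n) - int (iN n)"
  by (simp add: int_decode_def sum_decode_def ip_def iN_def)
lemma ip_iN: "ip n * iN n = 0"
  by (simp add: ip_def iN_def)

definition Npos :: "nat \<Rightarrow> nat" where
  "Npos u = ip (pfst u) * ip (psnd u) + iN (pfst u) * iN (psnd u)"
definition Nneg :: "nat \<Rightarrow> nat" where
  "Nneg u = ip (pfst u) * iN (psnd u) + iN (pfst u) * ip (psnd u)"
definition Dn :: "nat \<Rightarrow> nat" where
  "Dn u = (ip (psnd u) + iN (psnd u)) * (ip (psnd u) + iN (psnd u)) + of_bool (ip (psnd u) + iN (psnd u) = 0)"

definition rv :: "nat \<Rightarrow> real" where "rv u = of_rat (rat_dec u)"

lemma rat_dec_pfst: "rat_dec u = Fract (int_decode (pfst u)) (int_decode (psnd u))"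
  by (simp add: rat_dec_def pfst_def psnd_def split: prod.splits)

lemma Dn_pos: "0 < Dn u"
  by (cases "ip (psnd u) + iN (psnd u) = 0") (simp_all add: Dn_def)

lemma NposNneg: "Npos u = 0 \<or> Nneg u = 0"
  using ip_iN[of "pfst u"] ip_iN[of "psnd u"] by (auto simp: Npos_def Nneg_def)

lemma rv_repr: "rv u = (real (Npos u) - real (Nneg u)) / real (Dn u)"
proof -
  define a1 where "a1 = ip (pfst u)"
  define a2 where "a2 = iN (pfst u)"
  define b1 where "b1 = ip (psnd u)"
  define b2 where "b2 = iN (psnd u)"
  have ab: "a1 * a2 = 0" "b1 * b2 = 0" using ip_iN unfolding a1_def a2_def b1_def b2_def by auto
  have rv: "rv u = (real a1 - real a2) / (real b1 - real b2)"
    unfolding rv_def rat_dec_pfst Fract_of_int_quotient of_rat_divide int_decode_ip a1_def a2_def b1_def b2_def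
    by (simp add: of_rat_diff)
  show ?thesis
  proof (cases "b1 + b2 = 0")
    case True
    then have "b1 = 0" "b2 = 0" by auto
    then show ?thesis using rv by (simp add: Npos_def Nneg_def Dn_def b1_def[symmetric] b2_def[symmetric])
  next
    case False
    have D: "real (Dn u) = (real b1 + real b2)^2"
      using False by (simp add: Dn_def b1_def[symmetric] b2_def[symmetric] power2_eq_square)
    have sq: "(real b1 + real b2)^2 = (real b1 - real b2)^2"
      using ab(2) by (simp add: power2_eq_square algebra_simps)
    have nz: "real b1 - real b2 \<noteq> 0"
    proof
      assume "real b1 - real b2 = 0" then have "b1 = b2" by simp
      then show False using ab(2) False by simp
    qed
    have N: "real (Npos u) - real (Nneg u) = (real a1 - real a2) * (real b1 - real b2)"
      by (simp add: Npos_def Nneg_def a1_def[symmetric] a2_def[symmetric] b1_def[symmetric] b2_def[symmetric] algebra_simps)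
    show ?thesis unfolding rv N D sq using nz by (simp add: power2_eq_square)
  qed
qed

definition nab :: "nat \<Rightarrow> nat" where "nab u = Npos u + Nneg u"

lemma abs_rv: "\<bar>rv u\<bar> = real (nab u) / real (Dn u)"
  using NposNneg[of u] by (elim disjE) (simp_all add: rv_repr nab_def abs_divide)

lemma rv_sq: "(rv u)^2 = real (nab u * nab u) / real (Dn u * Dn u)"
proof -
  have "(rv u)^2 = \<bar>rv u\<bar>^2" by simp
  also have "\<dots> = (real (nab u) / real (Dn u))^2" by (simp only: abs_rv)
  also have "\<dots> = real (nab u * nab u) / real (Dn u * Dn u)" by (simp add: power_divide power2_eq_square)
  finally show ?thesis .
qed

lemma frac_lt: "(b::real) > 0 \<Longrightarrow> d > 0 \<Longrightarrow> (a / b < c / d) \<longleftrightarrow> a * d < c * b"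
  by (simp add: field_simps)

definition rless :: "nat \<Rightarrow> nat \<Rightarrow> bool" where
  "rless u v \<longleftrightarrow> Npos u * Dn v + Nneg v * Dn u < Npos v * Dn u + Nneg u * Dn v"

lemma rless_iff: "rless u v \<longleftrightarrow> rv u < rv v"
proof -
  have du: "real (Dn u) > 0" and dv: "real (Dn v) > 0" using Dn_pos by auto
  have "rv u < rv v \<longleftrightarrow> (real (Npos u) - real (Nneg u)) * real (Dn v) < (real (Npos v) - real (Nneg v)) * real (Dn u)"
    unfolding rv_repr by (rule frac_lt[OF du dv])
  also have "\<dots> \<longleftrightarrow> real (Npos u * Dn v + Nneg v * Dn u) < real (Npos v * Dn u + Nneg u * Dn v)"
    by (simp add: algebra_simps)
  also have "\<dots> \<longleftrightarrow> rless u v" unfolding rless_def by (rule of_nat_less_iff)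
  finally show ?thesis ..
qed

definition rpos :: "nat \<Rightarrow> bool" where "rpos u \<longleftrightarrow> 0 < Npos u"
definition rneg :: "nat \<Rightarrow> bool" where "rneg u \<longleftrightarrow> 0 < Nneg u"

lemma rpos_iff: "rpos u \<longleftrightarrow> 0 < rv u"
proof -
  have d: "real (Dn u) > 0" using Dn_pos by auto
  show ?thesis using NposNneg[of u] Dn_pos[of u] by (elim disjE) (simp_all add: rpos_def rv_repr d zero_less_divide_iff divide_less_0_iff)
qed
lemma rneg_iff: "rneg u \<longleftrightarrow> rv u < 0"
proof -
  have d: "real (Dn u) > 0" using Dn_pos by auto
  show ?thesis using NposNneg[of u] Dn_pos[of u] by (elim disjE) (simp_all add: rneg_def rv_repr d zero_less_divide_iff divide_less_0_iff)
qed

definition sq1 :: "nat \<Rightarrow> nat \<Rightarrow> bool" where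
  "sq1 x r \<longleftrightarrow> nab r * nab r * (Dn x * Dn x) < nab x * nab x * (Dn r * Dn r)"
definition sq2 :: "nat \<Rightarrow> nat \<Rightarrow> nat \<Rightarrow> bool" where
  "sq2 x y r \<longleftrightarrow> nab r * nab r * (Dn x * Dn x * (Dn y * Dn y)) <
      (nab x * nab x * (Dn y * Dn y) + nab y * nab y * (Dn x * Dn x)) * (Dn r * Dn r)"

lemma sq1_iff: "sq1 x r \<longleftrightarrow> (rv r)^2 < (rv x)^2"
proof -
  have p: "real (Dn x * Dn x) > 0" "real (Dn r * Dn r) > 0" using Dn_pos by auto
  have "(rv r)^2 < (rv x)^2 \<longleftrightarrow> real (nab r * nab r) * real (Dn x * Dn x) < real (nab x * nab x) * real (Dn r * Dn r)"
    unfolding rv_sq by (rule frac_lt[OF p(2) p(1)])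
  also have "\<dots> \<longleftrightarrow> sq1 x r" unfolding sq1_def of_nat_mult[symmetric] by (rule of_nat_less_iff)
  finally show ?thesis ..
qed

lemma sq2_iff: "sq2 x y r \<longleftrightarrow> (rv r)^2 < (rv x)^2 + (rv y)^2"
proof -
  have p: "real (Dn x * Dn x) > 0" "real (Dn r * Dn r) > 0" "real (Dn y * Dn y) > 0" using Dn_pos by auto
  have e: "(rv x)^2 + (rv y)^2 = real (nab x * nab x * (Dn y * Dn y) + nab y * nab y * (Dn x * Dn x)) / real (Dn x * Dn x * (Dn y * Dn y))"
  proof -
    have nz: "real (Dn x) \<noteq> 0" "real (Dn y) \<noteq> 0" using Dn_pos[of x] Dn_pos[of y] by auto
    show ?thesis unfolding rv_sq using nz by (simp add: field_simps)
  qed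
  have p2: "real (Dn x * Dn x * (Dn y * Dn y)) > 0" using p by simp
  have "(rv r)^2 < (rv x)^2 + (rv y)^2 \<longleftrightarrow>
      real (nab r * nab r) * real (Dn x * Dn x * (Dn y * Dn y)) < real (nab x * nab x * (Dn y * Dn y) + nab y * nab y * (Dn x * Dn x)) * real (Dn r * Dn r)"
    unfolding e by (subst rv_sq, rule frac_lt[OF p(2) p2])
  also have "\<dots> \<longleftrightarrow> sq2 x y r" unfolding sq2_def of_nat_mult[symmetric] by (rule of_nat_less_iff)
  finally show ?thesis ..
qed


lemma rf_ip: "recfn1 F \<Longrightarrow> recfn1 (\<lambda>g x. ip (F g x))"
  unfolding ip_def by (intro rf_if rp_even rf_div2 rf_const)
lemma rf_iN: "recfn1 F \<Longrightarrow> recfn1 (\<lambda>g x. iN (F g x))"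
  unfolding iN_def by (intro rf_if rp_even rf_div2 rf_const rf_add)
lemma rf_Npos: "recfn1 F \<Longrightarrow> recfn1 (\<lambda>g x. Npos (F g x))"
  unfolding Npos_def by (intro rf_add rf_mult rf_ip rf_iN rf_pfst rf_psnd)
lemma rf_Nneg: "recfn1 F \<Longrightarrow> recfn1 (\<lambda>g x. Nneg (F g x))"
  unfolding Nneg_def by (intro rf_add rf_mult rf_ip rf_iN rf_pfst rf_psnd)
lemma rf_Dn: "recfn1 F \<Longrightarrow> recfn1 (\<lambda>g x. Dn (F g x))"
  unfolding Dn_def by (intro rf_add rf_mult rf_ip rf_iN rf_pfst rf_psnd rf_ofbool rp_eq rf_const)
lemma rf_nab: "recfn1 F \<Longrightarrow> recfn1 (\<lambda>g x. nab (F g x))"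
  unfolding nab_def by (intro rf_add rf_Npos rf_Nneg)
lemma rp_rless: "recfn1 F \<Longrightarrow> recfn1 G \<Longrightarrow> recP (\<lambda>g x. rless (F g x) (G g x))"
  unfolding rless_def by (intro rp_less rf_add rf_mult rf_Npos rf_Nneg rf_Dn)
lemma rp_rpos: "recfn1 F \<Longrightarrow> recP (\<lambda>g x. rpos (F g x))"
  unfolding rpos_def by (intro rp_less rf_const rf_Npos)
lemma rp_rneg: "recfn1 F \<Longrightarrow> recP (\<lambda>g x. rneg (F g x))"
  unfolding rneg_def by (intro rp_less rf_const rf_Nneg)
lemma rp_sq1: "recfn1 F \<Longrightarrow> recfn1 G \<Longrightarrow> recP (\<lambda>g x. sq1 (F g x) (G g x))"
  unfolding sq1_def by (intro rp_less rf_mult rf_nab rf_Dn)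
lemma rp_sq2: "recfn1 F \<Longrightarrow> recfn1 G \<Longrightarrow> recfn1 H \<Longrightarrow> recP (\<lambda>g x. sq2 (F g x) (G g x) (H g x))"
  unfolding sq2_def by (intro rp_less rf_mult rf_add rf_nab rf_Dn)

section \<open>The inclusion test\<close>

definition R1 :: "nat \<Rightarrow> nat" where "R1 m = pfst (psnd m)"
definition R2 :: "nat \<Rightarrow> nat" where "R2 m = pfst (psnd (psnd m))"
definition R3 :: "nat \<Rightarrow> nat" where "R3 m = pfst (psnd (psnd (psnd m)))"
definition R4 :: "nat \<Rightarrow> nat" where "R4 m = psnd (psnd (psnd (psnd m)))"

definition rectR :: "real \<Rightarrow> real \<Rightarrow> real \<Rightarrow> real \<Rightarrow> complex option set" where
  "rectR a b c d = {Some z | z. a < Re z \<and> Re z < b \<and> c < Im z \<and> Im z < d}"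
definition extR :: "real \<Rightarrow> complex option set" where
  "extR r = {None} \<union> {Some z | z. r < norm z}"

lemma bset_alt: "bset m = (if pfst m = 0 then rectR (rv (R1 m)) (rv (R2 m)) (rv (R3 m)) (rv (R4 m))
                         else extR (rv (psnd m)))"
  by (simp add: bset_def R1_def R2_def R3_def R4_def rectR_def extR_def rect_def ext_disk_def rv_def
      pfst_def psnd_def split: prod.splits)

definition TRE :: "nat \<Rightarrow> nat \<Rightarrow> nat \<Rightarrow> nat \<Rightarrow> nat \<Rightarrow> bool" where
  "TRE a b c d r \<longleftrightarrow> rneg r \<or> (rpos a \<and> sq1 a r) \<or> (rneg b \<and> sq1 b r) \<or> (rpos c \<and> sq1 c r) \<or> (rneg d \<and> sq1 d r)
     \<or> (rpos a \<and> rpos c \<and> sq2 a c r) \<or> (rpos a \<and> rneg d \<and> sq2 a d r)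
     \<or> (rneg b \<and> rpos c \<and> sq2 b c r) \<or> (rneg b \<and> rneg d \<and> sq2 b d r)"

definition Tst :: "nat \<Rightarrow> nat \<Rightarrow> bool" where
  "Tst a k \<longleftrightarrow> (if pfst a = 0 then
      (if pfst k = 0 then \<not> rless (R1 a) (R1 k) \<and> \<not> rless (R2 k) (R2 a) \<and> \<not> rless (R3 a) (R3 k) \<and> \<not> rless (R4 k) (R4 a)
       else TRE (R1 a) (R2 a) (R3 a) (R4 a) (psnd k))
    else pfst k \<noteq> 0 \<and> \<not> rless (psnd a) (psnd k))"

lemma rp_if: "recP P \<Longrightarrow> recP Q \<Longrightarrow> recP R \<Longrightarrow> recP (\<lambda>g x. if P g x then Q g x else R g x)"
proof -
  assume a: "recP P" "recP Q" "recP R"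
  have "recP (\<lambda>g x. (P g x \<and> Q g x) \<or> (\<not> P g x \<and> R g x))" by (intro rp_disj rp_conj rp_not a)
  then show ?thesis by (rule recP_cong) auto
qed

lemma rp_Tst: "recfn1 F \<Longrightarrow> recfn1 G \<Longrightarrow> recP (\<lambda>g x. Tst (F g x) (G g x))"
  unfolding Tst_def TRE_def R1_def R2_def R3_def R4_def
  by (intro rp_if rp_conj rp_disj rp_not rp_eq rp_rless rp_rpos rp_rneg rp_sq1 rp_sq2 rf_pfst rf_psnd rf_const
      rp_imp rp_iff)

definition TREr :: "real \<Rightarrow> real \<Rightarrow> real \<Rightarrow> real \<Rightarrow> real \<Rightarrow> bool" where
  "TREr a b c d r \<longleftrightarrow> r < 0 \<or> (0 < a \<and> r^2 < a^2) \<or> (b < 0 \<and> r^2 < b^2) \<or> (0 < c \<and> r^2 < c^2) \<or> (d < 0 \<and> r^2 < d^2)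
     \<or> (0 < a \<and> 0 < c \<and> r^2 < a^2 + c^2) \<or> (0 < a \<and> d < 0 \<and> r^2 < a^2 + d^2)
     \<or> (b < 0 \<and> 0 < c \<and> r^2 < b^2 + c^2) \<or> (b < 0 \<and> d < 0 \<and> r^2 < b^2 + d^2)"

definition TstR :: "real \<Rightarrow> real \<Rightarrow> real \<Rightarrow> real \<Rightarrow> nat \<Rightarrow> bool" where
  "TstR a b c d k \<longleftrightarrow> (if pfst k = 0 then rv (R1 k) \<le> a \<and> b \<le> rv (R2 k) \<and> rv (R3 k) \<le> c \<and> d \<le> rv (R4 k)
       else TREr a b c d (rv (psnd k)))"

lemma Tst_rect: "pfst a = 0 \<Longrightarrow> Tst a k \<longleftrightarrow> TstR (rv (R1 a)) (rv (R2 a)) (rv (R3 a)) (rv (R4 a)) k"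
  by (simp add: Tst_def TstR_def TRE_def TREr_def rless_iff rpos_iff rneg_iff sq1_iff sq2_iff not_less)
lemma Tst_ext: "pfst a \<noteq> 0 \<Longrightarrow> Tst a k \<longleftrightarrow> pfst k \<noteq> 0 \<and> rv (psnd k) \<le> rv (psnd a)"
  by (simp add: Tst_def rless_iff not_less)


lemma sq_lt_pos: "0 < a \<Longrightarrow> a < (x::real) \<Longrightarrow> a^2 < x^2"
  by (rule power_strict_mono) auto
lemma sq_lt_neg: "x < b \<Longrightarrow> b < (0::real) \<Longrightarrow> b^2 < x^2"
proof -
  assume "x < b" "b < 0"
  then have "(-b)^2 < (-x)^2" by (intro power_strict_mono) auto
  then show ?thesis by simp
qed

lemma TREr_sound: "TREr a b c d r \<Longrightarrow> rectR a b c d \<subseteq> extR r"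
proof
  fix p assume T: "TREr a b c d r" and p: "p \<in> rectR a b c d"
  then obtain z where z: "p = Some z" "a < Re z" "Re z < b" "c < Im z" "Im z < d" by (auto simp: rectR_def)
  have n2: "(norm z)^2 = (Re z)^2 + (Im z)^2" by (rule cmod_power2)
  have x0: "(Re z)^2 \<ge> 0" "(Im z)^2 \<ge> 0" by simp_all
  have h1: "0 < a \<Longrightarrow> a^2 < (Re z)^2" using z by (intro sq_lt_pos) auto
  have h2: "b < 0 \<Longrightarrow> b^2 < (Re z)^2" using z by (intro sq_lt_neg) auto
  have h3: "0 < c \<Longrightarrow> c^2 < (Im z)^2" using z by (intro sq_lt_pos) auto
  have h4: "d < 0 \<Longrightarrow> d^2 < (Im z)^2" using z by (intro sq_lt_neg) auto
  have "r < norm z"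
  proof (cases "r < 0")
    case True then show ?thesis using norm_ge_zero[of z] by linarith
  next
    case False
    with T have "r^2 < (Re z)^2 + (Im z)^2"
      unfolding TREr_def using h1 h2 h3 h4 x0 by linarith
    then have "r^2 < (norm z)^2" using n2 by simp
    then show ?thesis by (rule power_less_imp_less_base) simp
  qed
  then show "p \<in> extR r" using z by (auto simp: extR_def)
qed

lemma TstR_sound: "TstR a b c d k \<Longrightarrow> rectR a b c d \<subseteq> bset k"
proof (cases "pfst k = 0")
  case True
  assume "TstR a b c d k"
  then show ?thesis using True unfolding TstR_def bset_alt rectR_def by auto
next
  case False
  assume "TstR a b c d k"
  then have "TREr a b c d (rv (psnd k))" using False unfolding TstR_def by simp
  then show ?thesis using False unfolding bset_alt by (simp add: TREr_sound)
qed

lemma Tst_sound: "Tst a k \<Longrightarrow> bset a \<subseteq> bset k"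
proof (cases "pfst a = 0")
  case True
  assume "Tst a k"
  then have "TstR (rv (R1 a)) (rv (R2 a)) (rv (R3 a)) (rv (R4 a)) k" using Tst_rect[OF True] by simp
  then show ?thesis unfolding bset_alt[of a] using True by (simp add: TstR_sound)
next
  case False
  assume "Tst a k"
  then have k: "pfst k \<noteq> 0" "rv (psnd k) \<le> rv (psnd a)" using Tst_ext[OF False] by auto
  show ?thesis unfolding bset_alt[of a] bset_alt[of k] using False k by (auto simp: extR_def)
qed

lemma rectR_sub_a: assumes "rectR a b c d \<subseteq> rectR a' b' c' d'" "a < b" "c < d" shows "a' \<le> a"
proof (rule ccontr)
  assume "\<not> a' \<le> a"
  then have "a < min a' b" using assms by simp
  then obtain x where x: "a < x" "x < min a' b" using dense by blast
  obtain y where y: "c < y" "y < d" using dense assms(3) by blast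
  have "Some (Complex x y) \<in> rectR a b c d" using x y by (auto simp: rectR_def)
  then have "Some (Complex x y) \<in> rectR a' b' c' d'" using assms(1) by blast
  then show False using x by (auto simp: rectR_def)
qed
lemma rectR_sub_b: assumes "rectR a b c d \<subseteq> rectR a' b' c' d'" "a < b" "c < d" shows "b \<le> b'"
proof (rule ccontr)
  assume "\<not> b \<le> b'"
  then have "max a b' < b" using assms by simp
  then obtain x where x: "max a b' < x" "x < b" using dense by blast
  obtain y where y: "c < y" "y < d" using dense assms(3) by blast
  have "Some (Complex x y) \<in> rectR a b c d" using x y by (auto simp: rectR_def)
  then have "Some (Complex x y) \<in> rectR a' b' c' d'" using assms(1) by blast
  then show False using x by (auto simp: rectR_def)
qed
lemma rectR_sub_c: assumes "rectR a b c d \<subseteq> rectR a' b' c' d'" "a < b" "c < d" shows "c' \<le> c"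
proof (rule ccontr)
  assume "\<not> c' \<le> c"
  then have "c < min c' d" using assms by simp
  then obtain y where y: "c < y" "y < min c' d" using dense by blast
  obtain x where x: "a < x" "x < b" using dense assms(2) by blast
  have "Some (Complex x y) \<in> rectR a b c d" using x y by (auto simp: rectR_def)
  then have "Some (Complex x y) \<in> rectR a' b' c' d'" using assms(1) by blast
  then show False using y by (auto simp: rectR_def)
qed
lemma rectR_sub_d: assumes "rectR a b c d \<subseteq> rectR a' b' c' d'" "a < b" "c < d" shows "d \<le> d'"
proof (rule ccontr)
  assume "\<not> d \<le> d'"
  then have "max c d' < d" using assms by simp
  then obtain y where y: "max c d' < y" "y < d" using dense by blast
  obtain x where x: "a < x" "x < b" using dense assms(2) by blast
  have "Some (Complex x y) \<in> rectR a b c d" using x y by (auto simp: rectR_def)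
  then have "Some (Complex x y) \<in> rectR a' b' c' d'" using assms(1) by blast
  then show False using y by (auto simp: rectR_def)
qed

lemma rectR_nonempty: "rectR a b c d \<noteq> {} \<Longrightarrow> a < b \<and> c < d"
  by (auto simp: rectR_def)

lemma rectR_unique:
  assumes eq: "rectR a b c d = rectR a' b' c' d'" and ab: "a < b" and cd: "c < d"
  shows "a' = a \<and> b' = b \<and> c' = c \<and> d' = d"
proof -
  have "Some (Complex ((a+b)/2) ((c+d)/2)) \<in> rectR a b c d" using ab cd by (auto simp: rectR_def)
  then have ne: "rectR a' b' c' d' \<noteq> {}" using eq by auto
  from rectR_nonempty[OF ne] have ab': "a' < b'" "c' < d'" by auto
  have s1: "rectR a b c d \<subseteq> rectR a' b' c' d'" and s2: "rectR a' b' c' d' \<subseteq> rectR a b c d" using eq by auto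
  show ?thesis
    using rectR_sub_a[OF s1 ab cd] rectR_sub_a[OF s2 ab'] rectR_sub_b[OF s1 ab cd] rectR_sub_b[OF s2 ab']
      rectR_sub_c[OF s1 ab cd] rectR_sub_c[OF s2 ab'] rectR_sub_d[OF s1 ab cd] rectR_sub_d[OF s2 ab']
    by auto
qed

lemma extR_unique: assumes eq: "extR s = extR s'" and s: "0 < s" shows "s' = s"
proof (rule ccontr)
  assume ne: "s' \<noteq> s"
  show False
  proof (cases "s' < s")
    case True
    have "Some (complex_of_real s) \<in> extR s'" using True s by (auto simp: extR_def)
    then have "Some (complex_of_real s) \<in> extR s" using eq by simp
    then have "s < norm (complex_of_real s)" by (auto simp: extR_def)
    then show False using s by simp
  next
    case False
    then have "s < s'" using ne by simp
    have "Some (complex_of_real s') \<in> extR s" using \<open>s < s'\<close> s by (auto simp: extR_def)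
    then have "Some (complex_of_real s') \<in> extR s'" using eq by simp
    then have "s' < norm (complex_of_real s')" by (auto simp: extR_def)
    then show False using s \<open>s < s'\<close> by simp
  qed
qed

lemma rectR_ne_extR: "rectR a b c d \<noteq> extR r"
  by (auto simp: rectR_def extR_def)

lemma rat_dec_surj: "\<exists>n. rat_dec n = q"
proof (cases q)
  case (Fract a b)
  have "rat_dec (prod_encode (int_encode a, int_encode b)) = Fract a b" by (simp add: rat_dec_def)
  then show ?thesis using Fract by blast
qed

lemma rv_surj: "\<exists>n. rv n = of_rat q"
  using rat_dec_surj[of q] by (auto simp: rv_def)

lemma bset_rect_surj: "\<exists>m. bset m = rectR (of_rat a) (of_rat b) (of_rat c) (of_rat d)"
proof -
  obtain n1 n2 n3 n4 where n: "rv n1 = of_rat a" "rv n2 = of_rat b" "rv n3 = of_rat c" "rv n4 = of_rat d"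
    using rv_surj by metis
  have "bset (pe 0 (pe n1 (pe n2 (pe n3 n4)))) = rectR (of_rat a) (of_rat b) (of_rat c) (of_rat d)"
    unfolding bset_alt by (simp add: R1_def R2_def R3_def R4_def n)
  then show ?thesis by blast
qed

lemma bset_ext_surj: "\<exists>m. bset m = extR (of_rat s)"
proof -
  obtain n where n: "rv n = of_rat s" using rv_surj by metis
  have "bset (pe 1 n) = extR (of_rat s)" unfolding bset_alt by (simp add: n)
  then show ?thesis by blast
qed


section \<open>Completeness of the test\<close>

lemma sq_lower: assumes e: "0 < (e::real)"
  shows "(if e < \<bar>x\<bar> then \<bar>x\<bar> - e else 0)^2 \<ge> x^2 - 2 * e * \<bar>x\<bar>"
proof (cases "e < \<bar>x\<bar>")
  case True
  have "(\<bar>x\<bar> - e)^2 = x^2 - 2 * e * \<bar>x\<bar> + e^2" by (simp add: power2_eq_square algebra_simps)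
  then show ?thesis using True by simp
next
  case False
  have "x^2 = \<bar>x\<bar> * \<bar>x\<bar>" by (simp add: power2_eq_square)
  also have "\<dots> \<le> e * \<bar>x\<bar>" using False by (intro mult_right_mono) auto
  finally have h: "x^2 \<le> e * \<bar>x\<bar>" .
  have h2: "0 \<le> e * \<bar>x\<bar>" using e by simp
  have "x^2 - 2 * e * \<bar>x\<bar> \<le> 0" using h h2 by linarith
  then show ?thesis using False by simp
qed

lemma side_x:
  assumes e: "0 < e" and a: "x - e < a" "a < x" and b: "x < b" "b < x + e"
  shows "(0 < a \<and> (if e < \<bar>x\<bar> then \<bar>x\<bar> - e else 0)^2 < a^2) \<or>
         (b < 0 \<and> (if e < \<bar>x\<bar> then \<bar>x\<bar> - e else 0)^2 < b^2) \<or>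
         (if e < \<bar>x\<bar> then \<bar>x\<bar> - e else (0::real)) = 0"
proof (cases "e < \<bar>x\<bar>")
  case True
  show ?thesis
  proof (cases "0 < x")
    case True
    with \<open>e < \<bar>x\<bar>\<close> have "0 < x - e" by simp
    then have "(x - e)^2 < a^2" using a by (intro sq_lt_pos) auto
    then show ?thesis using \<open>e < \<bar>x\<bar>\<close> True \<open>0 < x - e\<close> a by auto
  next
    case False
    with \<open>e < \<bar>x\<bar>\<close> have xn: "x + e < 0" by simp
    then have "(x + e)^2 < b^2" using b by (intro sq_lt_neg) auto
    moreover have "(\<bar>x\<bar> - e)^2 = (x + e)^2" using False by (simp add: power2_eq_square algebra_simps)
    ultimately show ?thesis using \<open>e < \<bar>x\<bar>\<close> xn b by auto
  qed
next
  case False then show ?thesis by simp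
qed

lemma eps_ext:
  assumes r: "r < norm w"
  shows "\<exists>e>0. \<forall>a b c d. Re w - e < a \<longrightarrow> a < Re w \<longrightarrow> Re w < b \<longrightarrow> b < Re w + e \<longrightarrow>
           Im w - e < c \<longrightarrow> c < Im w \<longrightarrow> Im w < d \<longrightarrow> d < Im w + e \<longrightarrow> TREr a b c d r"
proof (cases "r < 0")
  case True
  then show ?thesis by (intro exI[of _ 1]) (simp add: TREr_def)
next
  case False
  define x where "x = Re w"
  define y where "y = Im w"
  have n2: "(norm w)^2 = x^2 + y^2" unfolding x_def y_def by (rule cmod_power2)
  have "r^2 < (norm w)^2" using r False by (intro power_strict_mono) auto
  then have S: "0 < x^2 + y^2 - r^2" using n2 by simp
  define e where "e = (x^2 + y^2 - r^2) / (2 * (\<bar>x\<bar> + \<bar>y\<bar>) + 1)"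
  have den: "0 < 2 * (\<bar>x\<bar> + \<bar>y\<bar>) + 1" by simp
  have e0: "0 < e" unfolding e_def using S den by simp
  have eS: "e * (2 * (\<bar>x\<bar> + \<bar>y\<bar>) + 1) = x^2 + y^2 - r^2" unfolding e_def using den by simp
  then have eS2: "2 * e * \<bar>x\<bar> + 2 * e * \<bar>y\<bar> < x^2 + y^2 - r^2" using e0 by (simp add: algebra_simps)
  define mx where "mx = (if e < \<bar>x\<bar> then \<bar>x\<bar> - e else 0)"
  define my where "my = (if e < \<bar>y\<bar> then \<bar>y\<bar> - e else 0)"
  have lx: "mx^2 \<ge> x^2 - 2 * e * \<bar>x\<bar>" unfolding mx_def by (rule sq_lower[OF e0])
  have ly: "my^2 \<ge> y^2 - 2 * e * \<bar>y\<bar>" unfolding my_def by (rule sq_lower[OF e0])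
  have main: "r^2 < mx^2 + my^2" using lx ly eS2 by linarith
  have r2: "0 \<le> r^2" by simp
  show ?thesis
  proof (intro exI[of _ e] conjI e0 allI impI)
    fix a b c d
    assume h: "Re w - e < a" "a < Re w" "Re w < b" "b < Re w + e" "Im w - e < c" "c < Im w" "Im w < d" "d < Im w + e"
    have px: "(0 < a \<and> mx^2 < a^2) \<or> (b < 0 \<and> mx^2 < b^2) \<or> mx = 0"
      unfolding mx_def using side_x[OF e0, of x a b] h unfolding x_def by auto
    have py: "(0 < c \<and> my^2 < c^2) \<or> (d < 0 \<and> my^2 < d^2) \<or> my = 0"
      unfolding my_def using side_x[OF e0, of y c d] h unfolding y_def by auto
    show "TREr a b c d r"
      using px py main r2 unfolding TREr_def by (smt (verit) zero_power2)
  qed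
qed

lemma eps_k:
  assumes z: "Some w \<in> bset k"
  shows "\<exists>e>0. \<forall>a b c d. Re w - e < a \<longrightarrow> a < Re w \<longrightarrow> Re w < b \<longrightarrow> b < Re w + e \<longrightarrow>
           Im w - e < c \<longrightarrow> c < Im w \<longrightarrow> Im w < d \<longrightarrow> d < Im w + e \<longrightarrow> TstR a b c d k"
proof (cases "pfst k = 0")
  case True
  then have z': "rv (R1 k) < Re w" "Re w < rv (R2 k)" "rv (R3 k) < Im w" "Im w < rv (R4 k)"
    using z unfolding bset_alt rectR_def by auto
  define e where "e = min (min (Re w - rv (R1 k)) (rv (R2 k) - Re w)) (min (Im w - rv (R3 k)) (rv (R4 k) - Im w))"
  have e0: "0 < e" using z' unfolding e_def by simp
  have e1: "e \<le> Re w - rv (R1 k)" "e \<le> rv (R2 k) - Re w" "e \<le> Im w - rv (R3 k)" "e \<le> rv (R4 k) - Im w"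
    unfolding e_def by auto
  show ?thesis
    by (intro exI[of _ e] conjI e0 allI impI) (use e1 True in \<open>simp add: TstR_def\<close>)
next
  case False
  then have "rv (psnd k) < norm w" using z unfolding bset_alt extR_def by auto
  from eps_ext[OF this] obtain e where e: "e > 0" "\<forall>a b c d. Re w - e < a \<longrightarrow> a < Re w \<longrightarrow> Re w < b \<longrightarrow> b < Re w + e \<longrightarrow>
           Im w - e < c \<longrightarrow> c < Im w \<longrightarrow> Im w < d \<longrightarrow> d < Im w + e \<longrightarrow> TREr a b c d (rv (psnd k))" by blast
  show ?thesis
  proof (intro exI[of _ e] conjI e(1) allI impI)
    fix a b c d
    assume h: "Re w - e < a" "a < Re w" "Re w < b" "b < Re w + e" "Im w - e < c" "c < Im w" "Im w < d" "d < Im w + e"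
    then have "TREr a b c d (rv (psnd k))" using e(2) by blast
    then show "TstR a b c d k" using False by (simp add: TstR_def)
  qed
qed


lemma Tst_complete_Some:
  "\<exists>A\<in>range bset. Some w \<in> A \<and> (\<forall>a. bset a = A \<longrightarrow> (\<forall>k<N. Some w \<in> bset k \<longrightarrow> Tst a k))"
proof -
  define K where "K = {k. k < N \<and> Some w \<in> bset k}"
  have fK: "finite K" unfolding K_def by simp
  define P where "P k e \<longleftrightarrow> (\<forall>a b c d. Re w - e < a \<longrightarrow> a < Re w \<longrightarrow> Re w < b \<longrightarrow> b < Re w + e \<longrightarrow>
           Im w - e < c \<longrightarrow> c < Im w \<longrightarrow> Im w < d \<longrightarrow> d < Im w + e \<longrightarrow> TstR a b c d k)" for k e
  have "\<forall>k\<in>K. \<exists>e. e > 0 \<and> P k e" using eps_k unfolding K_def P_def by blast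
  from bchoice[OF this] obtain ef where ef: "\<forall>k\<in>K. ef k > 0 \<and> P k (ef k)" by blast
  define e where "e = Min (insert 1 (ef ` K))"
  have fin: "finite (insert 1 (ef ` K))" using fK by simp
  have e0: "0 < e" unfolding e_def using fin ef by (subst Min_gr_iff) auto
  have ek: "e \<le> ef k" if "k \<in> K" for k unfolding e_def using fin that by (intro Min_le) auto
  obtain qa where qa: "Re w - e < of_rat qa" "of_rat qa < Re w" using of_rat_dense[of "Re w - e" "Re w"] e0 by auto
  obtain qb where qb: "Re w < of_rat qb" "of_rat qb < Re w + e" using of_rat_dense[of "Re w" "Re w + e"] e0 by auto
  obtain qc where qc: "Im w - e < of_rat qc" "of_rat qc < Im w" using of_rat_dense[of "Im w - e" "Im w"] e0 by auto
  obtain qd where qd: "Im w < of_rat qd" "of_rat qd < Im w + e" using of_rat_dense[of "Im w" "Im w + e"] e0 by auto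
  define A where "A = rectR (of_rat qa) (of_rat qb) (of_rat qc) (of_rat qd)"
  obtain m where m: "bset m = rectR (of_rat qa) (of_rat qb) (of_rat qc) (of_rat qd)" using bset_rect_surj by blast
  have Ar: "A \<in> range bset" unfolding A_def by (rule range_eqI[where f=bset and x=m]) (simp add: m)
  have zA: "Some w \<in> A" unfolding A_def rectR_def using qa qb qc qd by auto
  have ab: "(of_rat qa :: real) < of_rat qb" and cd: "(of_rat qc :: real) < of_rat qd" using qa qb qc qd by auto
  have "\<forall>a. bset a = A \<longrightarrow> (\<forall>k<N. Some w \<in> bset k \<longrightarrow> Tst a k)"
  proof (intro allI impI)
    fix a k assume ba: "bset a = A" and kN: "k < N" and zk: "Some w \<in> bset k"
    have pa: "pfst a = 0"
    proof (rule ccontr)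
      assume "pfst a \<noteq> 0"
      then have "bset a = extR (rv (psnd a))" by (simp add: bset_alt)
      then have "rectR (of_rat qa) (of_rat qb) (of_rat qc) (of_rat qd) = extR (rv (psnd a))" using ba unfolding A_def by simp
      then show False using rectR_ne_extR by blast
    qed
    then have "rectR (of_rat qa) (of_rat qb) (of_rat qc) (of_rat qd) = rectR (rv (R1 a)) (rv (R2 a)) (rv (R3 a)) (rv (R4 a))"
      using ba unfolding A_def bset_alt[of a] by simp
    from rectR_unique[OF this ab cd] have eq: "rv (R1 a) = of_rat qa" "rv (R2 a) = of_rat qb" "rv (R3 a) = of_rat qc" "rv (R4 a) = of_rat qd" by auto
    have kK: "k \<in> K" unfolding K_def using kN zk by simp
    have "P k (ef k)" using ef kK by blast
    moreover have "e \<le> ef k" using ek kK .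
    ultimately have f: "Re w - ef k < of_rat qa" "of_rat qb < Re w + ef k" "Im w - ef k < of_rat qc" "of_rat qd < Im w + ef k"
      and Pk: "P k (ef k)" using qa qb qc qd by auto
    have "TstR (of_rat qa) (of_rat qb) (of_rat qc) (of_rat qd) k"
      using Pk f qa(2) qb(1) qc(2) qd(1) unfolding P_def by blast
    then show "Tst a k" using Tst_rect[OF pa] eq by simp
  qed
  then show ?thesis using Ar zA by blast
qed

lemma Tst_complete_None:
  "\<exists>A\<in>range bset. None \<in> A \<and> (\<forall>a. bset a = A \<longrightarrow> (\<forall>k<N. None \<in> bset k \<longrightarrow> Tst a k))"
proof -
  define M where "M = Max (insert 1 ((\<lambda>k. rv (psnd k)) ` {..<N}))"
  have fin: "finite (insert 1 ((\<lambda>k. rv (psnd k)) ` {..<N}))" by simp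
  have M1: "1 \<le> M" unfolding M_def using fin by (intro Max_ge) auto
  have Mk: "rv (psnd k) \<le> M" if "k < N" for k unfolding M_def using fin that by (intro Max_ge) auto
  define s :: rat where "s = of_nat (nat \<lceil>M\<rceil> + 1)"
  have sr: "(of_rat s :: real) = of_nat (nat \<lceil>M\<rceil> + 1)" by (simp only: s_def of_rat_of_nat_eq)
  have sM: "M \<le> of_rat s" unfolding sr using M1 by linarith
  have s0: "(0::real) < of_rat s" using sM M1 by linarith
  define A where "A = extR (of_rat s)"
  obtain m where m: "bset m = extR (of_rat s)" using bset_ext_surj by blast
  have Ar: "A \<in> range bset" unfolding A_def by (rule range_eqI[where f=bset and x=m]) (simp add: m)
  have zA: "None \<in> A" unfolding A_def extR_def by simp
  have "\<forall>a. bset a = A \<longrightarrow> (\<forall>k<N. None \<in> bset k \<longrightarrow> Tst a k)"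
  proof (intro allI impI)
    fix a k assume ba: "bset a = A" and kN: "k < N" and zk: "None \<in> bset k"
    have pa: "pfst a \<noteq> 0"
    proof
      assume "pfst a = 0"
      then have "None \<in> bset a" using ba zA by simp
      then show False using \<open>pfst a = 0\<close> by (simp add: bset_alt rectR_def)
    qed
    then have "extR (rv (psnd a)) = extR (of_rat s)" using ba unfolding A_def bset_alt[of a] by simp
    then have "extR (of_rat s) = extR (rv (psnd a))" by simp
    from extR_unique[OF this s0] have eq: "rv (psnd a) = of_rat s" .
    have pk: "pfst k \<noteq> 0"
    proof
      assume "pfst k = 0" then show False using zk by (simp add: bset_alt rectR_def)
    qed
    show "Tst a k" using Tst_ext[OF pa] pk eq Mk[OF kN] sM by simp
  qed
  then show ?thesis using Ar zA by blast
qed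

lemma Tst_complete: "\<exists>A\<in>range bset. z \<in> A \<and> (\<forall>a. bset a = A \<longrightarrow> (\<forall>k<N. z \<in> bset k \<longrightarrow> Tst a k))"
  using Tst_complete_Some Tst_complete_None by (cases z) auto




section \<open>The machine M\<close>

definition gA :: "(nat \<Rightarrow> nat) \<Rightarrow> nat \<Rightarrow> nat \<Rightarrow> nat" where
  "gA G a k = (if even k then G (k + 2) else if Tst a (k div 2) then Suc (k div 2) else 0)"

definition init :: "nat \<Rightarrow> nat \<Rightarrow> nat" where "init pc nn = pe (pe 0 (pe pc (lcons nn 0))) 0"

definition fin :: "(nat \<Rightarrow> nat) \<Rightarrow> nat \<Rightarrow> nat" where
  "fin G n = nrun (gA G (G (2 * pfst n + 1) - 1)) (psnd (psnd n)) (init (G 0) (pfst (psnd n)))"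

definition Fout :: "(nat \<Rightarrow> nat) \<Rightarrow> nat \<Rightarrow> nat" where
  "Fout G n = (if G (2 * pfst n + 1) \<noteq> 0 \<and> psnd (fin G n) = 0 \<and> pfst (pfst (fin G n)) = 1
               then psnd (pfst (fin G n)) else 0)"

lemma rf_gA: "recfn1 K \<Longrightarrow> recfn1 Y \<Longrightarrow> recfn1 (\<lambda>g y. gA g (Y g y) (K g y))"
  unfolding gA_def by (intro rf_if rp_even rf_orc rf_add rf_const rp_Tst rf_div2 rf_suc)

lemma rf_fin: "recfn1 fin"
proof -
  have "recfn1 (\<lambda>g y. nrun (gA g ((\<lambda>g y. g (2 * pfst y + 1) - 1) g y)) (psnd (psnd y)) (init (g 0) (pfst (psnd y))))"
    by (rule rf_nrun[where Or=gA and Z="\<lambda>g y. g (2 * pfst y + 1) - 1"], rule rf_gA, assumption+,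
        (intro rf_psnd rf_id), unfold init_def, (intro rf_pe rf_const rf_orc rf_lcons rf_pfst rf_psnd rf_id),
        intro rf_sub rf_orc rf_add rf_mult rf_const rf_pfst rf_id)
  then show ?thesis unfolding fin_def[abs_def] by simp
qed

lemma rf_Fout: "recfn1 Fout"
proof -
  have f: "recfn1 (\<lambda>g x. fin g x)" using rf_fin by simp
  show ?thesis unfolding Fout_def[abs_def]
    by (intro rf_if rp_conj rp_not rp_eq rf_orc rf_add rf_mult rf_const rf_pfst rf_psnd rf_id f)
qed


lemma enc_final: assumes "enc s = x" "psnd x = 0" "pfst (pfst x) = 1" shows "s = (Rt (psnd (pfst x)), [])"
proof -
  obtain m st where s: "s = (m, st)" by (cases s)
  have x: "x = pe (enc_mode m) (list_encode (map enc_frame st))" using assms(1) s by (simp add: enc_def)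
  have "st = []" using assms(2) x by simp
  moreover obtain v where "m = Rt v" using assms(3) x by (cases m) auto
  ultimately show ?thesis using s x by simp
qed

lemma enc_final2: "psnd (enc (Rt v, [])) = 0" "pfst (pfst (enc (Rt v, []))) = 1" "psnd (pfst (enc (Rt v, []))) = v"
  by (simp_all add: enc_def)

lemma init_enc: "init (rf_enc p) nn = enc (Ev p [nn], [])"
  by (simp add: init_def enc_def)

lemma join_G0: "join (fseq X p) c 0 = rf_enc p"
  by (simp add: join_def fseq_def)
lemma join_Godd: "join (fseq X p) c (2 * j + 1) = c j"
  by (simp add: join_def)
lemma gA_join: "gA (join (fseq X p) c) a = join (chi X) (\<lambda>k. if Tst a k then Suc k else 0)"
proof
  fix k
  show "gA (join (fseq X p) c) a k = join (chi X) (\<lambda>k. if Tst a k then Suc k else 0) k"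
  proof (cases "even k")
    case True
    then have "even (k + 2)" "(k + 2) div 2 = Suc (k div 2)" by auto
    then show ?thesis using True by (simp add: gA_def join_def fseq_def)
  next
    case False
    then show ?thesis by (simp add: gA_def join_def)
  qed
qed

lemma join_agree: "(\<forall>k<N. q k = q' k) \<Longrightarrow> k < N \<Longrightarrow> join a q k = join a q' k"
  by (simp add: join_def)

lemma listedI: "q k = Suc m \<Longrightarrow> bset m \<in> listed q"
  unfolding listed_def by blast

lemma main_correct:
  assumes fn: "fun_name U f X p" and CU: "C \<subseteq> U" and cn: "cl_name C c"
  shows "cl_name (f ` C) (Fout (join (fseq X p) c))"
proof -
  define G where "G = join (fseq X p) c"
  have G0: "G 0 = rf_enc p" unfolding G_def by (rule join_G0)
  have Godd: "G (2 * j + 1) = c j" for j unfolding G_def by (rule join_Godd)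
  define s0 where "s0 nn = (Ev p [nn], [] :: frame list)" for nn
  have fin_eq: "fin G n = enc (run (gA G (c (pfst n) - 1)) (psnd (psnd n)) (s0 (pfst (psnd n))))" for n
    unfolding fin_def G0 Godd init_enc nrun_enc s0_def ..
  have gAj: "gA G a = join (chi X) (\<lambda>k. if Tst a k then Suc k else 0)" for a unfolding G_def by (rule gA_join)
  have lc: "listed c = {B \<in> range bset. B \<inter> C \<noteq> {}}" using cn unfolding cl_name_def .
  show ?thesis unfolding cl_name_def G_def[symmetric]
  proof (rule set_eqI, rule iffI)
    fix B assume "B \<in> listed (Fout G)"
    then obtain m n where Bm: "B = bset m" and rn: "Fout G n = Suc m" unfolding listed_def by blast
    define j where "j = pfst n"
    define nn where "nn = pfst (psnd n)"
    define t where "t = psnd (psnd n)"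
    define a where "a = c j - 1"
    have cond: "G (2 * pfst n + 1) \<noteq> 0" "psnd (fin G n) = 0" "pfst (pfst (fin G n)) = 1" "psnd (pfst (fin G n)) = Suc m"
      using rn unfolding Fout_def by (auto split: if_splits)
    have cj: "c j = Suc a" using cond(1) Godd unfolding a_def j_def by simp
    have run1: "run (gA G a) t (s0 nn) = (Rt (Suc m), [])"
      using enc_final[OF fin_eq[of n, symmetric] cond(2) cond(3)] cond(4)
      unfolding a_def j_def t_def nn_def by simp
    have "bset a \<in> listed c" using listedI[of c j a] cj by simp
    then have "bset a \<inter> C \<noteq> {}" using lc by simp
    then obtain z where zA: "z \<in> bset a" and zC: "z \<in> C" by blast
    obtain N where N: "\<forall>g'. (\<forall>k<N. g' k = gA G a k) \<longrightarrow> run g' t (s0 nn) = run (gA G a) t (s0 nn)"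
      using run_local by blast
    define q' where "q' k = (if k < N then (if Tst a k then Suc k else 0) else (if z \<in> bset (k - N) then Suc (k - N) else 0))" for k
    have ptz: "pt_name z q'"
      unfolding pt_name_def
    proof (rule set_eqI, rule iffI)
      fix B' assume "B' \<in> listed q'"
      then obtain m' k where B': "B' = bset m'" "q' k = Suc m'" unfolding listed_def by blast
      show "B' \<in> {B \<in> range bset. z \<in> B}"
      proof (cases "k < N")
        case True
        then have "Tst a k" "m' = k" using B' unfolding q'_def by (auto split: if_splits)
        then have "z \<in> bset m'" using Tst_sound zA by blast
        then show ?thesis using B' by simp
      next
        case False
        then have "z \<in> bset (k - N)" "m' = k - N" using B' unfolding q'_def by (auto split: if_splits)
        then show ?thesis using B' by simp
      qed
    next
      fix B' assume "B' \<in> {B \<in> range bset. z \<in> B}"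
      then obtain m' where B': "B' = bset m'" "z \<in> bset m'" by blast
      have "q' (N + m') = Suc m'" using B' unfolding q'_def by simp
      then show "B' \<in> listed q'" using B' listedI by blast
    qed
    define g' where "g' = join (chi X) q'"
    have agree: "\<forall>k<N. g' k = gA G a k"
    proof (intro allI impI)
      fix k assume "k < N"
      then have "k div 2 < N" by linarith
      then show "g' k = gA G a k" unfolding g'_def gAj join_def q'_def by simp
    qed
    have run2: "run g' t (s0 nn) = (Rt (Suc m), [])" using N agree run1 by simp
    have "z \<in> U" using zC CU by blast
    then obtain r' where cr: "computes p g' r'" and pr: "pt_name (f z) r'"
      using fn ptz unfolding fun_name_def g'_def by blast
    have "eval g' p [nn] (r' nn)" using cr unfolding computes_def by blast
    from eval_run[OF this] obtain t' where "run g' t' (Ev p [nn], []) = (Rt (r' nn), [])" by blast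
    then have "r' nn = Suc m" using run_det run2 unfolding s0_def by metis
    then have "bset m \<in> listed r'" by (rule listedI)
    then have "f z \<in> bset m" using pr unfolding pt_name_def by blast
    then show "B \<in> {B \<in> range bset. B \<inter> f ` C \<noteq> {}}" using Bm zC by blast
  next
    fix B assume "B \<in> {B \<in> range bset. B \<inter> f ` C \<noteq> {}}"
    then obtain z where zC: "z \<in> C" and fzB: "f z \<in> B" and Br: "B \<in> range bset" by blast
    define qz where "qz k = (if z \<in> bset k then Suc k else 0)" for k
    have ptz: "pt_name z qz"
      unfolding pt_name_def
    proof (rule set_eqI, rule iffI)
      fix B' assume "B' \<in> listed qz"
      then obtain m' k where B': "B' = bset m'" "qz k = Suc m'" unfolding listed_def by blast
      then have "z \<in> bset k" "m' = k" unfolding qz_def by (auto split: if_splits)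
      then show "B' \<in> {B \<in> range bset. z \<in> B}" using B' by simp
    next
      fix B' assume "B' \<in> {B \<in> range bset. z \<in> B}"
      then obtain m' where B': "B' = bset m'" "z \<in> bset m'" by blast
      then have "qz m' = Suc m'" unfolding qz_def by simp
      then show "B' \<in> listed qz" using B' listedI by blast
    qed
    define gz where "gz = join (chi X) qz"
    have "z \<in> U" using zC CU by blast
    then obtain r' where cr: "computes p gz r'" and pr: "pt_name (f z) r'"
      using fn ptz unfolding fun_name_def gz_def by blast
    have "B \<in> listed r'" using pr fzB Br unfolding pt_name_def by blast
    then obtain m nn where Bm: "B = bset m" and rnn: "r' nn = Suc m" unfolding listed_def by blast
    have "eval gz p [nn] (Suc m)" using cr rnn unfolding computes_def by metis
    from eval_run[OF this] obtain t where run1: "run gz t (s0 nn) = (Rt (Suc m), [])" unfolding s0_def by blast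
    obtain N where N: "\<forall>g'. (\<forall>k<N. g' k = gz k) \<longrightarrow> run g' t (s0 nn) = run gz t (s0 nn)"
      using run_local by blast
    obtain A where Ar: "A \<in> range bset" and zA: "z \<in> A"
      and At: "\<forall>a. bset a = A \<longrightarrow> (\<forall>k<N. z \<in> bset k \<longrightarrow> Tst a k)"
      using Tst_complete[of z N] by blast
    have "A \<in> listed c" using lc Ar zA zC by blast
    then obtain a j where cj: "c j = Suc a" and Aa: "A = bset a" unfolding listed_def by blast
    have iff: "Tst a k \<longleftrightarrow> z \<in> bset k" if "k < N" for k
      using At Aa that Tst_sound zA by blast
    have agree: "\<forall>k<N. gA G a k = gz k"
    proof (intro allI impI)
      fix k assume "k < N"
      then have "k div 2 < N" by linarith
      then show "gA G a k = gz k" unfolding gz_def gAj join_def qz_def using iff by simp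
    qed
    have run2: "run (gA G a) t (s0 nn) = (Rt (Suc m), [])" using N agree run1 by simp
    define n where "n = pe j (pe nn t)"
    have fn_eq: "fin G n = enc (Rt (Suc m), [])"
      unfolding fin_eq n_def using cj run2 by simp
    have "Fout G n = Suc m" unfolding Fout_def using fn_eq Godd[of j] cj unfolding n_def
      by (simp add: enc_final2)
    then have "bset m \<in> listed (Fout G)" by (rule listedI)
    then show "B \<in> listed (Fout G)" using Bm by simp
  qed
qed

theorem theorem2p9:
  shows "\<exists>M :: rf. \<forall>U f C X p c.
           meromorphic_sphere U f \<longrightarrow> cs_closed C \<longrightarrow> C \<subseteq> U \<longrightarrow>
           fun_name U f X p \<longrightarrow> cl_name C c \<longrightarrow>
           (\<exists>r. computes M (join (fseq X p) c) r \<and> cl_name (f ` C) r)"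
proof -
  obtain P where P: "\<And>g x. eval g P [x] (Fout g x)" using rf_Fout unfolding recfn1_def by blast
  show ?thesis
  proof (intro exI[of _ P] allI impI)
    fix U f C X p c
    assume "fun_name U f X p" "C \<subseteq> U" "cl_name C c"
    then have "cl_name (f ` C) (Fout (join (fseq X p) c))" by (rule main_correct)
    moreover have "computes P (join (fseq X p) c) (Fout (join (fseq X p) c))"
      unfolding computes_def using P by blast
    ultimately show "\<exists>r. computes P (join (fseq X p) c) r \<and> cl_name (f ` C) r" by blast
  qed
qed


end
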